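(* Let $q=2^n$ with $n$ odd. Then every centric cube of $\hat{\mathcal X}$ with center $n_0$ is contained in exactly two centric decades of $\hat{\mathcal X}$ with center $n_0$ and in exactly one centric dodecade of $\hat{\mathcal X}$ with center $n_0$. Every centric decade of $\hat{\mathcal X}$ with center $n_0$ is contained in exactly one centric dodecade of $\hat{\mathcal X}$ with center $n_0$.
   Context: Let $q=2^n$, $V=V(6,q)$, and let $Q=Q^-(5,q)$ be the set of singular points of a non-degenerate quadratic form $f$ of Witt index $2$ on $V$, a generalized quadrangle of order $(q,q^2)$ whose lines are the totally singular lines; $\perp$ is the polarity defined by the bilinear form of $f$. Let $H_0$ be a hyperplane with $Q_0:=Q\cap H_0\cong Q(4,q)$ parabolic, and $n_0:=H_0^\perp$. $\hat{\mathcal X}$ is the geometry with points $Q\setminus Q_0$ and lines $l\setminus\{l\cap Q_0\}$ for lines $l$ of $Q$ not in $Q_0$; $\hat\Gamma$ is its collinearity graph. For $k\ge3$, a centric $2k$-configuration of $\hat{\mathcal X}$ with center $n_0$ is a set of $2k$ points $\{x_i^a: i=1,\dots,k,\ a=1,2\}$ of $Q\setminus Q_0$ such that $x_i^a,x_j^b$ are adjacent in $\hat\Gamma$ iff $i\ne j$ and $a\ne b$, and each projective line through $x_i^1,x_i^2$ passes through $n_0$; it is called a centric cube, decade, dodecade for $k=4,5,6$ respectively. Containment means inclusion of point sets. *)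

theory Defs
  imports "HOL-Analysis.Finite_Cartesian_Product"
begin

text \<open>Vectors of V(6,q) are elements of type 'a^6 over a finite field 'a.
  Projective points are represented as the 1-dimensional subspaces themselves.\<close>

type_synonym 'a vec6 = "'a ^ 6"

definition quadratic_form :: "('a::field ^ 6 \<Rightarrow> 'a) \<Rightarrow> bool" where
  "quadratic_form f \<longleftrightarrow>
     (\<exists>A :: 6 \<Rightarrow> 6 \<Rightarrow> 'a. \<forall>v. f v = (\<Sum>i\<in>UNIV. \<Sum>j\<in>UNIV. A i j * v$i * v$j))"

definition polar :: "('a::field ^ 6 \<Rightarrow> 'a) \<Rightarrow> 'a ^ 6 \<Rightarrow> 'a ^ 6 \<Rightarrow> 'a" where
  "polar f x y = f (x + y) - f x - f y"

definition nondeg_on :: "('a::field ^ 6) set \<Rightarrow> ('a ^ 6 \<Rightarrow> 'a) \<Rightarrow> bool" where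
  "nondeg_on W f \<longleftrightarrow>
     (\<forall>v\<in>W. v \<noteq> 0 \<and> f v = 0 \<longrightarrow> \<not> (\<forall>w\<in>W. polar f v w = 0))"

definition ts_subspace_dim :: "('a::field ^ 6 \<Rightarrow> 'a) \<Rightarrow> nat \<Rightarrow> bool" where
  "ts_subspace_dim f d \<longleftrightarrow>
     (\<exists>u :: nat \<Rightarrow> 'a ^ 6.
        (\<forall>c. (\<Sum>i<d. c i *s u i) = 0 \<longrightarrow> (\<forall>i<d. c i = 0)) \<and>
        (\<forall>c. f (\<Sum>i<d. c i *s u i) = 0))"

definition witt_index :: "('a::field ^ 6 \<Rightarrow> 'a) \<Rightarrow> nat \<Rightarrow> bool" where
  "witt_index f d \<longleftrightarrow> ts_subspace_dim f d \<and> \<not> ts_subspace_dim f (Suc d)"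

definition is_hyperplane :: "('a::field ^ 6) set \<Rightarrow> bool" where
  "is_hyperplane H \<longleftrightarrow> (\<exists>h :: 'a ^ 6. h \<noteq> 0 \<and> H = {v. (\<Sum>i\<in>UNIV. h$i * v$i) = 0})"

definition perp :: "('a::field ^ 6 \<Rightarrow> 'a) \<Rightarrow> ('a ^ 6) set \<Rightarrow> ('a ^ 6) set" where
  "perp f W = {x. \<forall>w\<in>W. polar f x w = 0}"

definition pt :: "'a::field ^ 6 \<Rightarrow> ('a ^ 6) set" where
  "pt v = range (\<lambda>c. c *s v)"

definition proj_points :: "('a::field ^ 6) set set" where
  "proj_points = {pt v | v. v \<noteq> 0}"

definition join :: "('a::field ^ 6) set \<Rightarrow> ('a ^ 6) set \<Rightarrow> ('a ^ 6) set" where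
  "join P R = {p + r | p r. p \<in> P \<and> r \<in> R}"

definition sing_points :: "('a::field ^ 6 \<Rightarrow> 'a) \<Rightarrow> ('a ^ 6) set set" where
  "sing_points f = {pt v | v. v \<noteq> 0 \<and> f v = 0}"

definition ts_lines :: "('a::field ^ 6 \<Rightarrow> 'a) \<Rightarrow> ('a ^ 6) set set" where
  "ts_lines f = {join P R | P R. P \<in> proj_points \<and> R \<in> proj_points \<and> P \<noteq> R \<and>
                                (\<forall>w\<in>join P R. f w = 0)}"

definition Xhat_points :: "('a::field ^ 6 \<Rightarrow> 'a) \<Rightarrow> ('a ^ 6) set \<Rightarrow> ('a ^ 6) set set" where
  "Xhat_points f H0 = {P \<in> sing_points f. \<not> P \<subseteq> H0}"

definition Xhat_adj :: "('a::field ^ 6 \<Rightarrow> 'a) \<Rightarrow> ('a ^ 6) set \<Rightarrow> ('a ^ 6) set \<Rightarrow> ('a ^ 6) set \<Rightarrow> bool" where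
  "Xhat_adj f H0 P R \<longleftrightarrow>
     P \<in> Xhat_points f H0 \<and> R \<in> Xhat_points f H0 \<and> P \<noteq> R \<and>
     (\<exists>L\<in>ts_lines f. \<not> L \<subseteq> H0 \<and> P \<subseteq> L \<and> R \<subseteq> L)"

text \<open>Centric 2k-configuration of hat X with center n0 = H0^perp, as a set of points.\<close>
definition centric_config ::
  "('a::field ^ 6 \<Rightarrow> 'a) \<Rightarrow> ('a ^ 6) set \<Rightarrow> nat \<Rightarrow> ('a ^ 6) set set \<Rightarrow> bool" where
  "centric_config f H0 k S \<longleftrightarrow>
     (\<exists>x :: nat \<Rightarrow> nat \<Rightarrow> ('a ^ 6) set.
        S = {x i a | i a. i \<in> {1..k} \<and> a \<in> {1,2}} \<and>
        card S = 2 * k \<and>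
        S \<subseteq> Xhat_points f H0 \<and>
        (\<forall>i\<in>{1..k}. \<forall>j\<in>{1..k}. \<forall>a\<in>{1,2}. \<forall>b\<in>{1,2}.
            Xhat_adj f H0 (x i a) (x j b) \<longleftrightarrow> i \<noteq> j \<and> a \<noteq> b) \<and>
        (\<forall>i\<in>{1..k}. perp f H0 \<subseteq> join (x i 1) (x i 2)))"

end

theory Submission
  imports Defs "HOL-Library.Cardinality"
begin

locale qf =
  fixes f :: "'a::{field,finite} ^ 6 \<Rightarrow> 'a"
  assumes char2: "(1::'a) + 1 = 0"
  and qf: "quadratic_form f"
begin

lemma neg_eq[simp]: "- (x::'a) = x"
proof -
  have "x + x = (1+1) * x" by (simp add: algebra_simps)
  then have "x + x = 0" using char2 by simp
  then show ?thesis by (simp add: add_eq_0_iff)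
qed

lemma minus_eq[simp]: "(x::'a) - y = x + y"
  by (metis diff_conv_add_uminus neg_eq)

lemma add_self[simp]: "(x::'a) + x = 0"
  by (metis diff_self minus_eq)

lemma two_zero[simp]: "(2::'a) = 0"
proof -
  have "(2::'a) = 1 + 1" by (rule one_add_one[symmetric])
  also have "\<dots> = 0" by (rule char2)
  finally show ?thesis .
qed

lemma add_self2[simp]: "(x::'a) + (x + y) = y"
  by (simp add: add.assoc[symmetric])

lemma sum0_iff: "(x::'a) + y = 0 \<longleftrightarrow> x = y"
  by (metis add_eq_0_iff neg_eq)

lemma vneg_eq[simp]: "- (x::'a^6) = x"
  by (simp add: vec_eq_iff)

lemma vminus_eq[simp]: "(x::'a^6) - y = x + y"
  by (simp add: vec_eq_iff)

lemma vadd_self[simp]: "(x::'a^6) + x = 0"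
  by (simp add: vec_eq_iff)

lemma vadd_self2[simp]: "(x::'a^6) + (x + y) = y"
  by (simp add: add.assoc[symmetric])

lemma vsum0_iff: "(x::'a^6) + y = 0 \<longleftrightarrow> x = y"
  by (metis add_eq_0_iff vneg_eq)

lemma vadd_cancel: "(x::'a^6) = y + z \<longleftrightarrow> x + y = z"
  by (metis vadd_self2 add.commute)

lemma add_cancel: "(x::'a) = y + z \<longleftrightarrow> x + y = z"
  by (metis add_self2 add.commute)

definition Am where "Am = (SOME A :: 6 \<Rightarrow> 6 \<Rightarrow> 'a. \<forall>v. f v = (\<Sum>i\<in>UNIV. \<Sum>j\<in>UNIV. A i j * v$i * v$j))"

lemma f_eq: "f v = (\<Sum>i\<in>UNIV. \<Sum>j\<in>UNIV. Am i j * v$i * v$j)"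
  using someI_ex[OF qf[unfolded quadratic_form_def]] unfolding Am_def by blast

abbreviation B where "B \<equiv> polar f"

lemma B_eq: "B x y = (\<Sum>i\<in>UNIV. \<Sum>j\<in>UNIV. Am i j * (x$i * y$j + y$i * x$j))"
proof -
  have e: "\<And>i j. Am i j * (x+y)$i * (x+y)$j = Am i j * x$i * x$j + Am i j * (x$i * y$j + y$i * x$j) + Am i j * y$i * y$j"
    by (simp add: algebra_simps)
  have "f (x+y) = (\<Sum>i\<in>UNIV. \<Sum>j\<in>UNIV. Am i j * x$i * x$j + Am i j * (x$i * y$j + y$i * x$j) + Am i j * y$i * y$j)"
    unfolding f_eq[of "x+y"] e by (rule refl)
  also have "\<dots> = f x + (\<Sum>i\<in>UNIV. \<Sum>j\<in>UNIV. Am i j * (x$i * y$j + y$i * x$j)) + f y"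
    unfolding f_eq[of x] f_eq[of y] by (simp only: sum.distrib)
  finally show ?thesis unfolding polar_def by simp
qed

lemma B_add_left: "B (x + y) z = B x z + B y z"
proof -
  have e: "\<And>i j. Am i j * ((x+y)$i * z$j + z$i * (x+y)$j) = Am i j * (x$i * z$j + z$i * x$j) + Am i j * (y$i * z$j + z$i * y$j)"
    by (simp add: algebra_simps)
  show ?thesis unfolding B_eq e by (simp only: sum.distrib)
qed
lemma B_sym: "B x y = B y x"
  unfolding B_eq by (simp only: add.commute)
lemma B_add_right: "B z (x + y) = B z x + B z y"
  using B_add_left B_sym by metis
lemma B_smult_left: "B (c *s x) y = c * B x y"
proof -
  have e: "\<And>i j. Am i j * ((c *s x)$i * y$j + y$i * (c *s x)$j) = c * (Am i j * (x$i * y$j + y$i * x$j))"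
    by (simp add: algebra_simps)
  show ?thesis unfolding B_eq e by (simp only: sum_distrib_left)
qed
lemma B_smult_right: "B y (c *s x) = c * B y x"
  using B_smult_left B_sym by metis
lemma B_self[simp]: "B x x = 0"
proof -
  have e: "\<And>i j. Am i j * (x$i * x$j + x$i * x$j) = 0"
    by simp
  show ?thesis unfolding B_eq e by simp
qed
lemma f_smult: "f (c *s x) = c^2 * f x"
proof -
  have e: "\<And>i j. Am i j * (c *s x)$i * (c *s x)$j = c^2 * (Am i j * x$i * x$j)"
    by (simp add: algebra_simps power2_eq_square)
  show ?thesis unfolding f_eq[of "c *s x"] f_eq[of x] e by (simp only: sum_distrib_left)
qed
lemma f_zero[simp]: "f 0 = 0"
  using f_smult[of 0 0] by simp
lemma B_zero_left[simp]: "B 0 x = 0"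
  using B_smult_left[of 0 x x] by simp
lemma B_zero_right[simp]: "B x 0 = 0"
  using B_zero_left B_sym by metis
lemma f_add: "f (x + y) = f x + f y + B x y"
  unfolding polar_def by simp

lemmas Bsimps = B_add_left B_add_right B_smult_left B_smult_right f_add f_smult

end

lemma char2_of_card:
  assumes "card (UNIV :: 'a::{field,finite} set) = 2 ^ n" "n \<ge> 1"
  shows "(1::'a) + 1 = 0"
proof (rule ccontr)
  assume h: "(1::'a) + 1 \<noteq> 0"
  have ne: "(x::'a) \<noteq> - x" if "x \<noteq> 0" for x
  proof
    assume "x = - x"
    then have "(1 + 1) * x = 0" by (simp add: algebra_simps)
    then show False using h that by simp
  qed
  let ?N = "UNIV - {0::'a}"
  let ?C = "(\<lambda>x. {x, - x}) ` ?N"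
  have c2: "card c = 2" if "c \<in> ?C" for c
  proof -
    from that obtain x where "x \<noteq> 0" "c = {x, -x}" by auto
    then show ?thesis using ne by simp
  qed
  have dj: "c1 \<inter> c2 = {}" if "c1 \<in> ?C" "c2 \<in> ?C" "c1 \<noteq> c2" for c1 c2
  proof -
    from that obtain x y where "c1 = {x, -x}" "c2 = {y, -y}" by auto
    with that(3) show ?thesis by auto
  qed
  have "2 * card ?C = card (\<Union>?C)"
    by (rule card_partition) (use c2 dj in auto)
  moreover have "\<Union>?C = ?N" by auto
  moreover have "card ?N = 2 ^ n - 1"
    using assms by (simp add: card_Diff_subset)
  ultimately have "2 * card ?C = 2 ^ n - 1" by simp
  moreover have "odd ((2::nat) ^ n - 1)" using assms(2)
    by (simp add: odd_pos)
  ultimately show False by (metis even_mult_iff even_numeral)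
qed

context
  assumes c2: "(1::'a::{field,finite}) + 1 = 0"
begin

lemma c2_neg: "- (x::'a) = x"
proof -
  have "x + x = (1+1) * x" by (simp add: algebra_simps)
  then have "x + x = 0" using c2 by simp
  then show ?thesis by (simp add: add_eq_0_iff)
qed

lemma c2_two: "(2::'a) = 0"
proof -
  have "(2::'a) = 1 + 1" by simp
  then show ?thesis using c2 by (simp only:)
qed

lemma c2_sq_add: "((x::'a) + y)^2 = x^2 + y^2"
  by (simp add: power2_eq_square algebra_simps c2_two)

lemma c2_sqrt: "\<exists>r. r^2 = (c::'a)"
proof -
  have "inj (\<lambda>x::'a. x^2)"
  proof (rule injI)
    fix x y :: 'a assume "x^2 = y^2"
    then have "(x + y)^2 = y^2 + y^2" unfolding c2_sq_add by simp
    also have "\<dots> = 0" by (simp add: c2_two)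
    finally have "(x + y)^2 = 0" .
    then have "x + y = 0" by simp
    then show "x = y" by (simp add: add_eq_0_iff c2_neg)
  qed
  then have "surj (\<lambda>x::'a. x^2)" using finite_UNIV_inj_surj[of "\<lambda>x::'a. x^2"] by simp
  then show ?thesis by (metis surjD)
qed

end

lemma fermat_field:
  assumes "(a::'a::{field,finite}) \<noteq> 0"
  shows "a ^ (card (UNIV :: 'a set) - 1) = 1"
proof -
  let ?N = "UNIV - {0::'a}"
  have bij: "bij_betw (\<lambda>x. a * x) ?N ?N"
    unfolding bij_betw_def
  proof
    show "inj_on (\<lambda>x. a * x) ?N" using assms by (auto intro: inj_onI)
    show "(\<lambda>x. a * x) ` ?N = ?N"
    proof
      show "(\<lambda>x. a * x) ` ?N \<subseteq> ?N" using assms by auto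
      show "?N \<subseteq> (\<lambda>x. a * x) ` ?N"
      proof
        fix y assume "y \<in> ?N"
        then have "y = a * (y / a)" "y / a \<in> ?N" using assms by auto
        then show "y \<in> (\<lambda>x. a * x) ` ?N" by blast
      qed
    qed
  qed
  have "prod (\<lambda>x. x) ?N = prod (\<lambda>x. a * x) ?N"
    using prod.reindex_bij_betw[OF bij, of "\<lambda>x. x"] by simp
  also have "\<dots> = a ^ card ?N * prod (\<lambda>x. x) ?N"
    by (simp add: prod.distrib)
  finally have "a ^ card ?N = 1"
    by (simp add: prod_zero_iff)
  moreover have "card ?N = card (UNIV :: 'a set) - 1" by (simp add: card_Diff_subset)
  ultimately show ?thesis by simp
qed

lemma pow2_odd_mod3: "odd n \<Longrightarrow> (2::nat)^n mod 3 = 2"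
proof (induction n rule: nat_less_induct)
  case (1 n)
  show ?case
  proof (cases "n = 1")
    case True then show ?thesis by simp
  next
    case False
    with 1(2) obtain m where m: "n = Suc (Suc m)" "odd m"
      by (metis One_nat_def dvd_0_right even_Suc not0_implies_Suc)
    then have "2^m mod 3 = (2::nat)" using 1 by auto
    then show ?thesis unfolding m by (simp add: mod_mult_right_eq[of 4, symmetric])
  qed
qed

lemma no_T1:
  assumes "card (UNIV :: 'a::{field,finite} set) = 2 ^ n" "odd n"
  shows "(a::'a)^2 + a \<noteq> 1"
proof
  assume h: "a^2 + a = 1"
  have "n \<ge> 1" using assms(2) by (cases n) auto
  then have c2: "(1::'a) + 1 = 0" using char2_of_card assms(1) by blast
  have neg: "- (x::'a) = x" for x using c2_neg[OF c2] .
  have a0: "a \<noteq> 0" using h by auto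
  have "a^2 = 1 - a" using h by (simp add: eq_diff_eq)
  then have a2: "a^2 = a + 1" using neg by (simp add: add.commute)
  have a3: "a^3 = 1"
  proof -
    have "a^3 = a * a^2" by (simp add: power3_eq_cube power2_eq_square)
    also have "\<dots> = a^2 + a" using a2 by (simp add: algebra_simps power2_eq_square)
    finally show ?thesis using h by simp
  qed
  obtain m where m: "card (UNIV :: 'a set) - 1 = 3 * m + 1"
  proof -
    have "(2::nat)^n mod 3 = 2" using pow2_odd_mod3 assms(2) .
    moreover have "\<And>x::nat. x mod 3 = 2 \<Longrightarrow> x - 1 = 3 * ((x - 1) div 3) + 1" by presburger
    ultimately have "(2::nat)^n - 1 = 3 * ((2^n - 1) div 3) + 1" by blast
    then show ?thesis using that assms(1) by simp
  qed
  have "a ^ (3 * m + 1) = 1" using fermat_field[OF a0] m by simp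
  then have "a = 1" by (simp add: power_add power_mult a3)
  then show False using h c2 by simp
qed

lemma T_index2:
  assumes c2: "(1::'a::{field,finite}) + 1 = 0"
    and n1: "\<forall>a::'a. a^2 + a \<noteq> 1"
    and nc: "\<forall>a::'a. a^2 + a \<noteq> c"
  shows "\<exists>a::'a. a^2 + a = 1 + c"
proof -
  have neg: "- (x::'a) = x" for x using c2_neg[OF c2] .
  have yy: "y + y = (0::'a)" for y
  proof -
    have "y + y = (1 + 1) * y" by (simp add: algebra_simps)
    then show ?thesis using c2 by simp
  qed
  have sub: "x = y + z \<Longrightarrow> z = x + (y::'a)" for x y z
  proof -
    assume "x = y + z"
    then have "x + y = z + (y + y)" by (simp add: algebra_simps)
    then show ?thesis using yy by simp
  qed
  have sq: "(x+y)^2 = x^2 + (y::'a)^2" for x y using c2_sq_add[OF c2] .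
  define T where "T = (\<lambda>a::'a. a^2 + a)"
  let ?H = "range T"
  have Tadd: "T a + T b = T (a + b)" for a b unfolding T_def sq by (simp add: algebra_simps)
  have T1: "T (a + 1) = T a" for a
    unfolding T_def sq by (simp add: algebra_simps c2_two[OF c2])
  have fib: "T -` {T a} = {a, a + 1}" for a
  proof
    show "{a, a+1} \<subseteq> T -` {T a}"
      using T1 by auto
    show "T -` {T a} \<subseteq> {a, a+1}"
    proof
      fix b assume "b \<in> T -` {T a}"
      then have "T b = T a" by simp
      then have "T (a + b) = 0" using Tadd[of a b] by (simp add: c2_two[OF c2])
      then have "(a+b) * (a + b + 1) = 0" unfolding T_def by (simp add: power2_eq_square algebra_simps)
      then have "a + b = 0 \<or> a + b + 1 = 0" by simp
      then have "b = a \<or> b = a + 1"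
      proof
        assume "a + b = 0" then show ?thesis using sub[of 0 a b] by simp
      next
        assume "a + b + 1 = 0" then show ?thesis using sub[of 0 "a+1" b] by (simp add: algebra_simps)
      qed
      then show "b \<in> {a, a+1}" by simp
    qed
  qed
  have a1ne: "a \<noteq> a + 1" for a :: 'a by simp
  let ?C = "(\<lambda>h. T -` {h}) ` ?H"
  have cc: "card c = 2" if "c \<in> ?C" for c
  proof -
    from that obtain a where "c = T -` {T a}" by auto
    then show ?thesis using fib a1ne by simp
  qed
  have dj: "c1 \<inter> c2 = {}" if "c1 \<in> ?C" "c2 \<in> ?C" "c1 \<noteq> c2" for c1 c2
  proof -
    from that obtain a b where "c1 = T -` {T a}" "c2 = T -` {T b}" by auto
    with that(3) show ?thesis by auto
  qed
  have "2 * card ?C = card (\<Union>?C)"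
    by (rule card_partition) (use cc dj in auto)
  moreover have "\<Union>?C = UNIV" by auto
  moreover have "card ?C = card ?H"
  proof (rule card_image, rule inj_onI)
    fix x y assume "x \<in> ?H" "y \<in> ?H" "T -` {x} = T -` {y}"
    then show "x = y" by auto
  qed
  ultimately have cardH: "2 * card ?H = card (UNIV :: 'a set)" by simp
  have cnot: "c \<notin> ?H" using nc unfolding T_def by auto
  have disj: "?H \<inter> (\<lambda>h. c + h) ` ?H = {}"
  proof (rule ccontr)
    assume "?H \<inter> (\<lambda>h. c + h) ` ?H \<noteq> {}"
    then obtain a b where "T a = c + T b" by auto
    then have "T a = T b + c" by (simp add: add.commute)
    then have "c = T a + T b" by (rule sub)
    then show False using cnot Tadd by auto
  qed
  have "card (?H \<union> (\<lambda>h. c + h) ` ?H) = card ?H + card ((\<lambda>h. c + h) ` ?H)"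
    using disj by (simp add: card_Un_disjoint)
  also have "card ((\<lambda>h. c + h) ` ?H) = card ?H" by (rule card_image) (auto intro: inj_onI)
  finally have "card (?H \<union> (\<lambda>h. c + h) ` ?H) = card (UNIV :: 'a set)" using cardH by simp
  then have "?H \<union> (\<lambda>h. c + h) ` ?H = UNIV" by (simp add: card_eq_UNIV_imp_eq_UNIV)
  moreover have "1 \<notin> ?H" using n1 unfolding T_def by auto
  ultimately have "1 \<in> (\<lambda>h. c + h) ` ?H" by auto
  then obtain a where "1 = c + T a" by auto
  then have "T a = 1 + c" by (rule sub)
  then show ?thesis unfolding T_def by blast
qed


context qf
begin

lemma pt_mem: "x \<in> pt v \<longleftrightarrow> (\<exists>c. x = c *s v)"
  unfolding pt_def by auto

lemma pt_self: "v \<in> pt v"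
  unfolding pt_mem by (rule exI[of _ 1]) simp

lemma pt_zero: "0 \<in> pt v"
  unfolding pt_mem by (rule exI[of _ 0]) simp

lemma pt_add: "x \<in> pt v \<Longrightarrow> y \<in> pt v \<Longrightarrow> x + y \<in> pt v"
  unfolding pt_mem by (metis vector_sadd_rdistrib)

lemma pt_scale: "(c::'a) \<noteq> 0 \<Longrightarrow> pt (c *s v) = pt v"
proof
  assume c: "c \<noteq> 0"
  show "pt (c *s v) \<subseteq> pt v"
  proof
    fix x assume "x \<in> pt (c *s v)"
    then obtain d where "x = d *s (c *s v)" unfolding pt_mem by blast
    then have "x = (d * c) *s v" by (simp add: vector_smult_assoc)
    then show "x \<in> pt v" unfolding pt_mem by blast
  qed
  show "pt v \<subseteq> pt (c *s v)"
  proof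
    fix x assume "x \<in> pt v"
    then obtain d where "x = d *s v" unfolding pt_mem by blast
    then have "x = (d / c) *s (c *s v)" using c by (simp add: vector_smult_assoc)
    then show "x \<in> pt (c *s v)" unfolding pt_mem by blast
  qed
qed

lemma join_mem: "x \<in> join (pt v) (pt w) \<longleftrightarrow> (\<exists>a b. x = a *s v + b *s w)"
  unfolding join_def pt_mem by blast

lemma join_add:
  assumes "P \<in> proj_points" "R \<in> proj_points" "x \<in> join P R" "y \<in> join P R"
  shows "x + y \<in> join P R"
proof -
  from assms(1,2) obtain p r where P: "P = pt p" and R: "R = pt r"
    unfolding proj_points_def by blast
  from assms(3,4) obtain a b a' b' where "x = a *s p + b *s r" "y = a' *s p + b' *s r"
    unfolding P R join_mem by blast
  then have "x + y = (a + a') *s p + (b + b') *s r"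
    by (simp add: vector_sadd_rdistrib algebra_simps)
  then show ?thesis unfolding P R join_mem by blast
qed

end

locale geo0 = qf f for f :: "'a::{field,finite} ^ 6 \<Rightarrow> 'a" +
  fixes H0 :: "('a ^ 6) set" and n0 :: "'a ^ 6"
  assumes fn0: "f n0 = 1"
    and H0_eq: "\<And>x. x \<in> H0 \<longleftrightarrow> B x n0 = 0"
begin

definition nrm where "nrm v \<longleftrightarrow> f v = 0 \<and> B v n0 = 1"

definition good :: "nat \<Rightarrow> (nat \<Rightarrow> 'a^6) \<Rightarrow> bool" where "good k v \<longleftrightarrow> (\<forall>i\<in>{1..k}. nrm (v i)) \<and>
   (\<forall>i\<in>{1..k}. \<forall>j\<in>{1..k}. i \<noteq> j \<longrightarrow> B (v i) (v j) = 1)"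

definition cset :: "nat \<Rightarrow> (nat \<Rightarrow> 'a^6) \<Rightarrow> ('a^6) set set" where "cset k v = (\<Union>i\<in>{1..k}. {pt (v i), pt (v i + n0)})"

definition pair where "pair y = {pt y, pt (y + n0)}"

definition XX :: "nat \<Rightarrow> (nat \<Rightarrow> 'a^6) \<Rightarrow> ('a^6) set" where "XX k v = {y. nrm y \<and> (\<forall>i\<in>{1..k}. B y (v i) = 1)}"

lemma n0_ne: "n0 \<noteq> 0" using fn0 by auto

lemma Bn0n0[simp]: "B n0 n0 = 0" by simp

lemma nrm_ne: "nrm v \<Longrightarrow> v \<noteq> 0"
  unfolding nrm_def by auto

lemma nrm_n0: "nrm v \<Longrightarrow> nrm (v + n0)"
  unfolding nrm_def by (simp add: f_add B_add_left fn0)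

lemma nrm_Bn0: "nrm v \<Longrightarrow> B n0 v = 1"
  unfolding nrm_def by (simp add: B_sym)

lemma pt_eq: assumes "nrm v" "nrm w" shows "pt v = pt w \<longleftrightarrow> v = w"
proof
  assume "pt v = pt w"
  then have "w \<in> pt v" using pt_self by blast
  then obtain c where c: "w = c *s v" unfolding pt_mem by blast
  then have "B w n0 = c * B v n0" by (simp add: B_smult_left)
  then have "c = 1" using assms unfolding nrm_def by simp
  then show "v = w" using c by simp
qed simp

lemma pt_Xhat: assumes "nrm v" shows "pt v \<in> Xhat_points f H0"
proof -
  have "pt v \<in> sing_points f" unfolding sing_points_def using assms nrm_ne[OF assms]
    unfolding nrm_def by blast
  moreover have "v \<notin> H0" using assms unfolding H0_eq nrm_def by simp
  then have "\<not> pt v \<subseteq> H0" using pt_self by blast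
  ultimately show ?thesis unfolding Xhat_points_def by blast
qed

lemma Xhat_nrm: assumes "P \<in> Xhat_points f H0" shows "\<exists>v. nrm v \<and> P = pt v"
proof -
  from assms obtain w where P: "P = pt w" and w: "w \<noteq> 0" "f w = 0" and nsub: "\<not> pt w \<subseteq> H0"
    unfolding Xhat_points_def sing_points_def by blast
  from nsub obtain x where "x \<in> pt w" "x \<notin> H0" by blast
  then obtain c where "c *s w \<notin> H0" unfolding pt_mem by blast
  then have "c * B w n0 \<noteq> 0" unfolding H0_eq by (simp add: B_smult_left)
  then have b: "B w n0 \<noteq> 0" by simp
  define v where "v = (1 / B w n0) *s w"
  have "nrm v" unfolding nrm_def v_def using b w by (simp add: f_smult B_smult_left)
  moreover have "pt v = pt w" unfolding v_def using b by (simp add: pt_scale)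
  ultimately show ?thesis using P by metis
qed

lemma adj_iff:
  assumes v: "nrm v" and w: "nrm w"
  shows "Xhat_adj f H0 (pt v) (pt w) \<longleftrightarrow> v \<noteq> w \<and> B v w = 0"
proof
  assume adj: "Xhat_adj f H0 (pt v) (pt w)"
  then have "pt v \<noteq> pt w" unfolding Xhat_adj_def by blast
  then have ne: "v \<noteq> w" by blast
  from adj obtain L where L: "L \<in> ts_lines f" "pt v \<subseteq> L" "pt w \<subseteq> L"
    unfolding Xhat_adj_def by blast
  from L(1) obtain P R where PR: "L = join P R" "P \<in> proj_points" "R \<in> proj_points"
      and sing: "\<forall>x\<in>join P R. f x = 0"
    unfolding ts_lines_def by blast
  have "v \<in> L" "w \<in> L" using L pt_self by blast+
  then have "v + w \<in> L" using join_add PR by blast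
  then have "f (v + w) = 0" using sing PR by blast
  then have "B v w = 0" using v w unfolding nrm_def by (simp add: f_add)
  with ne show "v \<noteq> w \<and> B v w = 0" by blast
next
  assume h: "v \<noteq> w \<and> B v w = 0"
  then have ne: "pt v \<noteq> pt w" using pt_eq v w by blast
  let ?L = "join (pt v) (pt w)"
  have pp: "pt v \<in> proj_points" "pt w \<in> proj_points"
    unfolding proj_points_def using nrm_ne v w by blast+
  have sing: "\<forall>x\<in>?L. f x = 0"
  proof
    fix x assume "x \<in> ?L"
    then obtain a b where "x = a *s v + b *s w" unfolding join_mem by blast
    then show "f x = 0" using v w h unfolding nrm_def by (simp add: f_add f_smult B_smult_left B_smult_right)
  qed
  have Lts: "?L \<in> ts_lines f" unfolding ts_lines_def using pp ne sing by blast
  have sub1: "pt v \<subseteq> ?L"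
  proof
    fix x assume "x \<in> pt v"
    then obtain c where "x = c *s v" unfolding pt_mem by blast
    then have "x = c *s v + 0 *s w" by simp
    then show "x \<in> ?L" unfolding join_mem by blast
  qed
  have sub2: "pt w \<subseteq> ?L"
  proof
    fix x assume "x \<in> pt w"
    then obtain c where "x = c *s w" unfolding pt_mem by blast
    then have "x = 0 *s v + c *s w" by simp
    then show "x \<in> ?L" unfolding join_mem by blast
  qed
  have "v \<notin> H0" using v unfolding H0_eq nrm_def by simp
  then have "\<not> ?L \<subseteq> H0" using sub1 pt_self by blast
  then show "Xhat_adj f H0 (pt v) (pt w)"
    unfolding Xhat_adj_def using pt_Xhat v w ne Lts sub1 sub2 by blast
qed

lemma pair_partner:
  assumes v: "nrm v" and w: "nrm w" and n0j: "n0 \<in> join (pt v) (pt w)"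
  shows "w = v + n0"
proof -
  from n0j obtain \<alpha> \<beta> where e: "n0 = \<alpha> *s v + \<beta> *s w" unfolding join_mem by blast
  have "B n0 n0 = \<alpha> * B v n0 + \<beta> * B w n0"
    by (subst (1) e) (simp add: B_add_left B_smult_left)
  then have "\<alpha> + \<beta> = 0" using v w unfolding nrm_def by simp
  then have ab: "\<beta> = \<alpha>" using sum0_iff by metis
  have bw: "\<beta> *s w = n0 + \<alpha> *s v"
    using e unfolding vadd_cancel[symmetric] by (simp add: add.commute)
  have "f (\<beta> *s w) = 0" using w unfolding nrm_def by (simp add: f_smult)
  moreover have "f (n0 + \<alpha> *s v) = 1 + \<alpha>"
    using v nrm_Bn0[OF v] unfolding nrm_def by (simp add: f_add f_smult fn0 B_smult_right)
  ultimately have "1 + \<alpha> = 0" using bw by simp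
  then have "\<alpha> = 1" using sum0_iff by metis
  then have "w = n0 + v" using bw ab by simp
  then show ?thesis by (simp add: add.commute)
qed

end

locale geo = geo0 f H0 n0 for f :: "'a::{field,finite} ^ 6 \<Rightarrow> 'a" and H0 n0 +
  assumes perpH0: "perp f H0 = pt n0"
    and nots3: "\<not> ts_subspace_dim f 3"
    and noT1: "\<And>a::'a. a^2 + a \<noteq> 1"


context geo
begin

lemma third_idx:
  assumes "3 \<le> (k::nat)" "i \<in> {1..k}" "j \<in> {1..k}"
  shows "\<exists>l\<in>{1..k}. l \<noteq> i \<and> l \<noteq> j"
proof -
  have "1 \<in> {1..k}" "2 \<in> {1..k}" "3 \<in> {1..k}" using assms(1) by auto
  moreover have "(1 \<noteq> i \<and> 1 \<noteq> j) \<or> (2 \<noteq> i \<and> 2 \<noteq> j) \<or> (3 \<noteq> i \<and> (3::nat) \<noteq> j)" by auto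
  ultimately show ?thesis by blast
qed

lemma good_nrm: "good k v \<Longrightarrow> i \<in> {1..k} \<Longrightarrow> nrm (v i)"
  unfolding good_def by blast

lemma good_B: "good k v \<Longrightarrow> i \<in> {1..k} \<Longrightarrow> j \<in> {1..k} \<Longrightarrow> i \<noteq> j \<Longrightarrow> B (v i) (v j) = 1"
  unfolding good_def by blast

lemma ifsum0: "((if P then 0 else 1) + (if Q then 0 else (1::'a)) = 0) \<longleftrightarrow> (P \<longleftrightarrow> Q)"
  by auto

lemma config_of_good:
  assumes k: "3 \<le> (k::nat)" and g: "good k v"
  shows "centric_config f H0 k (cset k v)"
proof -
  define vv where "vv i a = (if a = (1::nat) then v i else v i + n0)" for i a
  define x where "x i a = pt (vv i a)" for i a
  have nv: "nrm (vv i a)" if "i \<in> {1..k}" for i a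
    unfolding vv_def using good_nrm[OF g that] nrm_n0 by simp
  have Bvv: "B (vv i a) (vv j b) = (if i = j then 0 else 1) + (if a = b then 0 else 1)"
    if "i \<in> {1..k}" "j \<in> {1..k}" "a \<in> {1,2}" "b \<in> {1,2}" for i j a b
  proof -
    have bij: "B (v i) (v j) = (if i = j then 0 else 1)"
      using good_B[OF g that(1,2)] by auto
    have n1: "B (v i) n0 = 1" "B n0 (v j) = 1" "B (v j) n0 = 1" "B n0 (v i) = 1"
      using good_nrm[OF g that(1)] good_nrm[OF g that(2)] nrm_Bn0 unfolding nrm_def by auto
    show ?thesis using that(3,4) unfolding vv_def
      by (auto simp: B_add_left B_add_right bij n1)
  qed
  have vv_inj: "i = j \<and> a = b"
    if ij: "i \<in> {1..k}" "j \<in> {1..k}" and ab: "a \<in> {1,2}" "b \<in> {1,2}" and eq: "vv i a = vv j b" for i j a b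
  proof -
    have "B (vv j b) (vv i a) = 0" using eq by simp
    then have e: "(i = j) = (a = b)" using Bvv[OF ij(2,1) ab(2,1)] ifsum0 by (metis)
    show ?thesis
    proof (cases "i = j")
      case True
      then show ?thesis using e by simp
    next
      case False
      then have ab': "a \<noteq> b" using e by simp
      obtain l where l: "l \<in> {1..k}" "l \<noteq> i" "l \<noteq> j" using third_idx[OF k ij] by blast
      have "B (vv i a) (vv l 1) = B (vv j b) (vv l 1)" using eq by simp
      then have "(if a = 1 then 0 else 1) = (if b = 1 then 0 else (1::'a))"
        using Bvv[OF ij(1) l(1) ab(1)] Bvv[OF ij(2) l(1) ab(2)] l by simp
      then have "a = b" using ab by (auto split: if_splits)
      with ab' show ?thesis by simp
    qed
  qed
  let ?D = "{1..k} \<times> {1::nat,2}"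
  have Seq: "cset k v = {x i a | i a. i \<in> {1..k} \<and> a \<in> {1,2}}"
  proof
    show "cset k v \<subseteq> {x i a | i a. i \<in> {1..k} \<and> a \<in> {1,2}}"
    proof
      fix y assume "y \<in> cset k v"
      then obtain i where i: "i \<in> {1..k}" "y = pt (v i) \<or> y = pt (v i + n0)" unfolding cset_def by blast
      then have "y = x i 1 \<or> y = x i 2" unfolding x_def vv_def by auto
      then show "y \<in> {x i a | i a. i \<in> {1..k} \<and> a \<in> {1,2}}" using i(1) by blast
    qed
    show "{x i a | i a. i \<in> {1..k} \<and> a \<in> {1,2}} \<subseteq> cset k v"
    proof
      fix y assume "y \<in> {x i a | i a. i \<in> {1..k} \<and> a \<in> {1,2}}"
      then obtain i a where i: "i \<in> {1..k}" "a \<in> {1::nat,2}" "y = x i a" by blast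
      then have "y = pt (v i) \<or> y = pt (v i + n0)" unfolding x_def vv_def by auto
      then show "y \<in> cset k v" using i(1) unfolding cset_def by blast
    qed
  qed
  have Seq2: "cset k v = (\<lambda>(i,a). x i a) ` ?D"
    unfolding Seq
  proof (intro equalityI subsetI)
    fix y assume "y \<in> {x i a | i a. i \<in> {1..k} \<and> a \<in> {1,2}}"
    then obtain i a where "i \<in> {1..k}" "a \<in> {1::nat,2}" "y = x i a" by blast
    then have "(i,a) \<in> ?D" "y = (\<lambda>(i,a). x i a) (i,a)" by simp_all
    then show "y \<in> (\<lambda>(i,a). x i a) ` ?D" by (rule rev_image_eqI)
  next
    fix y assume "y \<in> (\<lambda>(i,a). x i a) ` ?D"
    then obtain p where p: "p \<in> ?D" "y = (\<lambda>(i,a). x i a) p" by (rule imageE)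
    obtain i a where "p = (i, a)" by (cases p)
    with p have "(i, a) \<in> ?D" "y = x i a" by simp_all
    then show "y \<in> {x i a | i a. i \<in> {1..k} \<and> a \<in> {1,2}}" by blast
  qed
  have inj: "inj_on (\<lambda>(i,a). x i a) ?D"
  proof (rule inj_onI, clarify)
    fix i a j b assume h: "i \<in> {1..k}" "a \<in> {1::nat,2}" "j \<in> {1..k}" "b \<in> {1::nat,2}" "x i a = x j b"
    then have "vv i a = vv j b" unfolding x_def using pt_eq nv by blast
    then show "i = j \<and> a = b" using vv_inj h by blast
  qed
  have card: "card (cset k v) = 2 * k"
    unfolding Seq2 using card_image[OF inj] by (simp add: card_cartesian_product)
  have sub: "cset k v \<subseteq> Xhat_points f H0"
  proof
    fix y assume "y \<in> cset k v"
    then obtain i a where "i \<in> {1..k}" "y = x i a" unfolding Seq by blast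
    then show "y \<in> Xhat_points f H0" unfolding x_def using pt_Xhat nv by simp
  qed
  have adj: "Xhat_adj f H0 (x i a) (x j b) \<longleftrightarrow> i \<noteq> j \<and> a \<noteq> b"
    if "i \<in> {1..k}" "j \<in> {1..k}" "a \<in> {1,2}" "b \<in> {1,2}" for i j a b
  proof -
    have "Xhat_adj f H0 (x i a) (x j b) \<longleftrightarrow> vv i a \<noteq> vv j b \<and> B (vv i a) (vv j b) = 0"
      unfolding x_def using adj_iff nv that by blast
    also have "\<dots> \<longleftrightarrow> i \<noteq> j \<and> a \<noteq> b"
    proof
      assume h: "vv i a \<noteq> vv j b \<and> B (vv i a) (vv j b) = 0"
      then have "(i = j) = (a = b)" using Bvv[OF that] ifsum0 by metis
      moreover have "\<not> (i = j \<and> a = b)" using h by auto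
      ultimately show "i \<noteq> j \<and> a \<noteq> b" by blast
    next
      assume h: "i \<noteq> j \<and> a \<noteq> b"
      then have "vv i a \<noteq> vv j b" using vv_inj that by blast
      moreover have "B (vv i a) (vv j b) = 0" using Bvv[OF that] h by simp
      ultimately show "vv i a \<noteq> vv j b \<and> B (vv i a) (vv j b) = 0" by blast
    qed
    finally show ?thesis .
  qed
  have perp: "perp f H0 \<subseteq> join (x i 1) (x i 2)" for i
  proof
    fix y assume "y \<in> perp f H0"
    then obtain c where "y = c *s n0" unfolding perpH0 pt_mem by blast
    then have "y = c *s v i + c *s (v i + n0)" by (simp add: vector_add_ldistrib)
    then show "y \<in> join (x i 1) (x i 2)" unfolding x_def vv_def join_mem by auto
  qed
  show ?thesis unfolding centric_config_def
  proof (intro exI[of _ x] conjI)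
    show "cset k v = {x i a | i a. i \<in> {1..k} \<and> a \<in> {1,2}}" by (rule Seq)
    show "card (cset k v) = 2 * k" by (rule card)
    show "cset k v \<subseteq> Xhat_points f H0" by (rule sub)
    show "\<forall>i\<in>{1..k}. \<forall>j\<in>{1..k}. \<forall>a\<in>{1,2}. \<forall>b\<in>{1,2}.
            Xhat_adj f H0 (x i a) (x j b) \<longleftrightarrow> i \<noteq> j \<and> a \<noteq> b"
      using adj by blast
    show "\<forall>i\<in>{1..k}. perp f H0 \<subseteq> join (x i 1) (x i 2)" using perp by blast
  qed
qed

end

context geo
begin

lemma good_of_config:
  assumes c: "centric_config f H0 k S"
  shows "\<exists>v. good k v \<and> S = cset k v"
proof -
  define x :: "nat \<Rightarrow> nat \<Rightarrow> ('a^6) set" where "x = (SOME x. S = {x i a | i a. i \<in> {1..k} \<and> a \<in> {1,2}} \<and>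
        card S = 2 * k \<and>
        S \<subseteq> Xhat_points f H0 \<and>
        (\<forall>i\<in>{1..k}. \<forall>j\<in>{1..k}. \<forall>a\<in>{1,2}. \<forall>b\<in>{1,2}.
            Xhat_adj f H0 (x i a) (x j b) \<longleftrightarrow> i \<noteq> j \<and> a \<noteq> b) \<and>
        (\<forall>i\<in>{1..k}. perp f H0 \<subseteq> join (x i 1) (x i 2)))"
  have H: "S = {x i a | i a. i \<in> {1..k} \<and> a \<in> {1,2}} \<and>
        card S = 2 * k \<and>
        S \<subseteq> Xhat_points f H0 \<and>
        (\<forall>i\<in>{1..k}. \<forall>j\<in>{1..k}. \<forall>a\<in>{1,2}. \<forall>b\<in>{1,2}.
            Xhat_adj f H0 (x i a) (x j b) \<longleftrightarrow> i \<noteq> j \<and> a \<noteq> b) \<and>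
        (\<forall>i\<in>{1..k}. perp f H0 \<subseteq> join (x i 1) (x i 2))"
    unfolding x_def using c unfolding centric_config_def by (rule someI_ex)
  have Sx: "S = {x i a | i a. i \<in> {1..k} \<and> a \<in> {1,2}}" using H by (rule conjunct1)
  have sub: "S \<subseteq> Xhat_points f H0" using H by (elim conjE)
  have adj: "\<forall>i\<in>{1..k}. \<forall>j\<in>{1..k}. \<forall>a\<in>{1,2}. \<forall>b\<in>{1,2}.
            Xhat_adj f H0 (x i a) (x j b) \<longleftrightarrow> i \<noteq> j \<and> a \<noteq> b" using H by (elim conjE)
  have perp: "\<forall>i\<in>{1..k}. perp f H0 \<subseteq> join (x i 1) (x i 2)" using H by (elim conjE)
  have xX: "x i a \<in> Xhat_points f H0" if "i \<in> {1..k}" "a \<in> {1,2}" for i a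
    using that sub unfolding Sx by blast
  define v where "v i = (SOME w. nrm w \<and> x i 1 = pt w)" for i
  have v1: "nrm (v i) \<and> x i 1 = pt (v i)" if "i \<in> {1..k}" for i
  proof -
    have "\<exists>w. nrm w \<and> x i 1 = pt w" using Xhat_nrm[OF xX[OF that]] by simp
    then show ?thesis unfolding v_def by (rule someI_ex)
  qed
  have v2: "x i 2 = pt (v i + n0)" if i: "i \<in> {1..k}" for i
  proof -
    obtain w where w: "nrm w" "x i 2 = pt w" using Xhat_nrm[OF xX[OF i]] by auto
    have "n0 \<in> perp f H0" unfolding perpH0 using pt_self by blast
    moreover have "perp f H0 \<subseteq> join (x i 1) (x i 2)" using perp i by blast
    ultimately have "n0 \<in> join (x i 1) (x i 2)" by blast
    then have "n0 \<in> join (pt (v i)) (pt w)" using v1[OF i] w(2) by simp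
    then have "w = v i + n0" using pair_partner v1[OF i] w(1) by blast
    then show ?thesis using w(2) by simp
  qed
  have g: "good k v" unfolding good_def
  proof (intro conjI ballI impI)
    fix i assume "i \<in> {1..k}" then show "nrm (v i)" using v1 by blast
  next
    fix i j assume ij: "i \<in> {1..k}" "j \<in> {1..k}" "i \<noteq> j"
    then have "Xhat_adj f H0 (x i 1) (x j 2)" using adj by auto
    then have "Xhat_adj f H0 (pt (v i)) (pt (v j + n0))" using v1 v2 ij by simp
    then have "B (v i) (v j + n0) = 0" using adj_iff v1 ij nrm_n0 by blast
    then have "B (v i) (v j) + 1 = 0" using v1 ij unfolding nrm_def by (simp add: B_add_right)
    then show "B (v i) (v j) = 1" using sum0_iff by metis
  qed
  have "S = cset k v"
  proof (intro equalityI subsetI)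
    fix y assume "y \<in> S"
    then obtain i a where ia: "i \<in> {1..k}" "a \<in> {1::nat,2}" "y = x i a" unfolding Sx by blast
    then have "y = pt (v i) \<or> y = pt (v i + n0)" using v1 v2 by auto
    then show "y \<in> cset k v" using ia(1) unfolding cset_def by blast
  next
    fix y assume "y \<in> cset k v"
    then obtain i where i: "i \<in> {1..k}" "y = pt (v i) \<or> y = pt (v i + n0)" unfolding cset_def by blast
    then have "y = x i 1 \<or> y = x i 2" using v1 v2 by auto
    then show "y \<in> S" unfolding Sx using i(1) by blast
  qed
  with g show ?thesis by blast
qed

end

context geo
begin

lemma vadd_n0n0[simp]: "x + n0 + n0 = x"
  by (simp add: add.assoc)

lemma Bu: "B (u + \<epsilon> *s n0) (u' + \<epsilon>' *s n0) = B u u' + \<epsilon>' * B u n0 + \<epsilon> * B n0 u'"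
  by (simp add: B_add_left B_add_right B_smult_left B_smult_right)

lemma memb:
  assumes g: "good m u" and y: "nrm y" and P: "pt y \<in> cset m u"
  shows "\<exists>s\<in>{1..m}. \<exists>\<epsilon>\<in>{0::'a,1}. y = u s + \<epsilon> *s n0"
proof -
  from P obtain s where s: "s \<in> {1..m}" "pt y = pt (u s) \<or> pt y = pt (u s + n0)"
    unfolding cset_def by blast
  have "nrm (u s)" "nrm (u s + n0)" using good_nrm[OF g s(1)] nrm_n0 by auto
  then have "y = u s \<or> y = u s + n0" using s(2) pt_eq y by blast
  then have "y = u s + 0 *s n0 \<or> y = u s + 1 *s n0" by simp
  then show ?thesis using s(1) by blast
qed

lemma eps_cases: "(\<epsilon>::'a) \<in> {0,1} \<Longrightarrow> \<delta> \<in> {0,1} \<Longrightarrow> \<delta> = \<epsilon> \<or> \<delta> = \<epsilon> + 1"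
  by auto

lemma pair_closed:
  assumes g: "good m u" and y: "nrm y" and P: "pt y \<in> cset m u"
  shows "pair y \<subseteq> cset m u"
proof -
  obtain s \<epsilon> where s: "s \<in> {1..m}" "\<epsilon> \<in> {0::'a,1}" "y = u s + \<epsilon> *s n0"
    using memb[OF g y P] by blast
  have "y = u s \<or> y = u s + n0" using s by auto
  then have "{y, y + n0} = {u s, u s + n0}"
  proof
    assume "y = u s + n0" then show ?thesis by (simp add: insert_commute)
  qed simp
  then have "pair y = {pt (u s), pt (u s + n0)}" unfolding pair_def by auto
  then show ?thesis using s(1) unfolding cset_def by blast
qed

lemma pair_n0: "pair (y + n0) = pair y"
  unfolding pair_def by (auto simp: add.assoc)

lemma pair_closed2:
  assumes g: "good m u" and y: "nrm y" and P: "P \<in> pair y" "P \<in> cset m u"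
  shows "pair y \<subseteq> cset m u"
proof -
  from P(1) have "P = pt y \<or> P = pt (y + n0)" unfolding pair_def by blast
  then show ?thesis
  proof
    assume "P = pt y" then show ?thesis using pair_closed[OF g y] P(2) by simp
  next
    assume "P = pt (y + n0)"
    then have "pair (y + n0) \<subseteq> cset m u" using pair_closed[OF g nrm_n0[OF y]] P(2) by simp
    then show ?thesis using pair_n0 by simp
  qed
qed

lemma pair_sub_cset: "i \<in> {1..k} \<Longrightarrow> pair (v i) \<subseteq> cset k v"
  unfolding pair_def cset_def by blast

lemma ext_point:
  assumes k: "3 \<le> (k::nat)" and gv: "good k v" and gu: "good m u"
    and sub: "cset k v \<subseteq> cset m u" and P: "P \<in> cset m u" "P \<notin> cset k v"
  shows "\<exists>y\<in>XX k v. P \<in> pair y"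
proof -
  have rep: "\<exists>s\<in>{1..m}. \<exists>\<epsilon>\<in>{0::'a,1}. v i = u s + \<epsilon> *s n0" if "i \<in> {1..k}" for i
  proof -
    have "pt (v i) \<in> cset k v" using that unfolding cset_def by blast
    then show ?thesis using memb[OF gu good_nrm[OF gv that]] sub by blast
  qed
  define S where "S i = (SOME s. s \<in> {1..m} \<and> (\<exists>\<epsilon>\<in>{0::'a,1}. v i = u s + \<epsilon> *s n0))" for i
  define E where "E i = (SOME \<epsilon>. \<epsilon> \<in> {0::'a,1} \<and> v i = u (S i) + \<epsilon> *s n0)" for i
  have SE: "S i \<in> {1..m} \<and> E i \<in> {0,1} \<and> v i = u (S i) + E i *s n0" if "i \<in> {1..k}" for i
  proof -
    have ex: "\<exists>s. s \<in> {1..m} \<and> (\<exists>\<epsilon>\<in>{0::'a,1}. v i = u s + \<epsilon> *s n0)"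
      using rep[OF that] by blast
    have h1: "S i \<in> {1..m} \<and> (\<exists>\<epsilon>\<in>{0::'a,1}. v i = u (S i) + \<epsilon> *s n0)"
      unfolding S_def by (rule someI_ex[OF ex])
    then have ex2: "\<exists>\<epsilon>. \<epsilon> \<in> {0::'a,1} \<and> v i = u (S i) + \<epsilon> *s n0" by blast
    have "E i \<in> {0::'a,1} \<and> v i = u (S i) + E i *s n0"
      unfolding E_def by (rule someI_ex[OF ex2])
    with h1 show ?thesis by blast
  qed
  from P(1) obtain j where j: "j \<in> {1..m}" "P = pt (u j) \<or> P = pt (u j + n0)"
    unfolding cset_def by blast
  have nuj: "nrm (u j)" using good_nrm[OF gu j(1)] .
  have notj0: "S i = j \<Longrightarrow> P \<in> pair (v i)" if i: "i \<in> {1..k}" for i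
  proof -
    assume "S i = j"
    then have vi: "v i = u j + E i *s n0" "E i \<in> {0,1}" using SE[OF i] by auto
    then have "v i = u j \<or> v i = u j + n0" by auto
    then have "{u j, u j + n0} = {v i, v i + n0}" by auto
    then have "pt ` {u j, u j + n0} = pt ` {v i, v i + n0}" by simp
    then have "{pt (u j), pt (u j + n0)} = pair (v i)" unfolding pair_def by simp
    then show "P \<in> pair (v i)" using j(2) by blast
  qed
  have notj: "S i \<noteq> j" if i: "i \<in> {1..k}" for i
    using notj0[OF i] pair_sub_cset[OF i] P(2) by blast
  have one: "(1::nat) \<in> {1..k}" using k by simp
  define y where "y = u j + E 1 *s n0"
  have E1: "E 1 \<in> {0,1}" using SE[OF one] by blast
  have ny: "nrm y"
  proof -
    have "y = u j \<or> y = u j + n0" using E1 unfolding y_def by auto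
    then show ?thesis using nuj nrm_n0 by auto
  qed
  have Py: "P \<in> pair y"
  proof -
    have "y = u j \<or> y = u j + n0" using E1 unfolding y_def by auto
    then have "{u j, u j + n0} = {y, y + n0}" by auto
    then show ?thesis using j(2) unfolding pair_def by auto
  qed
  have By: "B y (v i) = 1" if i: "i \<in> {1..k}" for i
  proof -
    have Bu1: "B (u j) n0 = 1" "B n0 (u (S i)) = 1"
      using nuj good_nrm[OF gu] SE[OF i] nrm_Bn0 unfolding nrm_def by auto
    have Buu: "B (u j) (u (S i)) = 1" using good_B[OF gu j(1)] SE[OF i] notj[OF i] by auto
    have Ei: "E i = E 1"
    proof (cases "i = 1")
      case True then show ?thesis by simp
    next
      case False
      have Bu2: "B (u (S 1)) n0 = 1" "B n0 (u (S i)) = 1"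
        using good_nrm[OF gu] SE[OF i] SE[OF one] nrm_Bn0 unfolding nrm_def by auto
      have v1i: "B (v 1) (v i) = 1" using good_B[OF gv one i] False by auto
      show ?thesis
      proof (cases "S 1 = S i")
        case True
        have "B (v 1) (v i) = E i + E 1"
          using SE[OF one] SE[OF i] True Bu2 Bu[of "u (S 1)" "E 1" "u (S i)" "E i"] by simp
        then have "E i + E 1 = 1" using v1i by simp
        then have "E i = E 1 + 1" by (subst add_cancel)
        then have vi: "v i = v 1 + n0" using SE[OF one] SE[OF i] True
          by (simp add: vector_sadd_rdistrib add.assoc)
        obtain l where l: "l \<in> {1..k}" "l \<noteq> 1" "l \<noteq> i" using third_idx[OF k one i] by blast
        have "B (v l) (v i) = 1" using good_B[OF gv l(1) i] l by simp
        moreover have "B (v l) (v 1 + n0) = 0"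
          using good_B[OF gv l(1) one] l good_nrm[OF gv l(1)] unfolding nrm_def
          by (simp add: B_add_right)
        ultimately show ?thesis using vi by simp
      next
        case False
        have Buu2: "B (u (S 1)) (u (S i)) = 1" using good_B[OF gu] SE[OF one] SE[OF i] False by auto
        have "B (v 1) (v i) = 1 + E i + E 1"
          using SE[OF one] SE[OF i] Bu2 Buu2 Bu[of "u (S 1)" "E 1" "u (S i)" "E i"] by simp
        then have "E i + E 1 = 0" using v1i by (simp add: add.assoc)
        then show ?thesis using sum0_iff by blast
      qed
    qed
    have "B y (v i) = 1 + E i + E 1"
      unfolding y_def using SE[OF i] Bu1 Buu Bu[of "u j" "E 1" "u (S i)" "E i"] by simp
    then show ?thesis using Ei by (simp add: add.assoc)
  qed
  have "y \<in> XX k v" unfolding XX_def using ny By by blast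
  with Py show ?thesis by blast
qed

end

lemma config_card: "centric_config f H0 k S \<Longrightarrow> card S = 2 * k"
  unfolding centric_config_def by (elim exE conjE)

context geo
begin

lemma good_ext:
  assumes g: "good k v" and y: "y \<in> XX k v"
  shows "good (Suc k) (v(Suc k := y))"
  unfolding good_def
proof (intro conjI ballI impI)
  fix i assume i: "i \<in> {1..Suc k}"
  show "nrm ((v(Suc k := y)) i)"
  proof (cases "i = Suc k")
    case True then show ?thesis using y unfolding XX_def by simp
  next
    case False then have "i \<in> {1..k}" using i by auto
    then show ?thesis using good_nrm[OF g] False by simp
  qed
next
  fix i j assume i: "i \<in> {1..Suc k}" and j: "j \<in> {1..Suc k}" and ij: "i \<noteq> j"
  show "B ((v(Suc k := y)) i) ((v(Suc k := y)) j) = 1"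
  proof (cases "i = Suc k")
    case True
    then have "j \<in> {1..k}" using j ij by auto
    then show ?thesis using True ij y unfolding XX_def by auto
  next
    case False
    then have i': "i \<in> {1..k}" using i by auto
    show ?thesis
    proof (cases "j = Suc k")
      case True
      then have "B y (v i) = 1" using y i' unfolding XX_def by auto
      then show ?thesis using True False by (simp add: B_sym)
    next
      case False
      then have "j \<in> {1..k}" using j by auto
      then show ?thesis using good_B[OF g i'] ij False \<open>i \<noteq> Suc k\<close> by simp
    qed
  qed
qed

lemma cset_ext: "cset (Suc k) (v(Suc k := y)) = cset k v \<union> pair y"
proof -
  have "{1..Suc k} = insert (Suc k) {1..k}" by auto
  moreover have "(\<Union>i\<in>{1..k}. {pt ((v(Suc k := y)) i), pt ((v(Suc k := y)) i + n0)})
      = (\<Union>i\<in>{1..k}. {pt (v i), pt (v i + n0)})" by auto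
  ultimately show ?thesis unfolding cset_def pair_def by auto
qed

lemma good_mono: assumes g: "good k v" and kk: "k' \<le> k" shows "good k' v"
proof -
  have sub: "{1..k'} \<subseteq> {1..k}" using kk by auto
  show ?thesis unfolding good_def
  proof (intro conjI ballI impI)
    fix i assume "i \<in> {1..k'}" then show "nrm (v i)" using good_nrm[OF g] sub by blast
  next
    fix i j assume "i \<in> {1..k'}" "j \<in> {1..k'}" "i \<noteq> j"
    then show "B (v i) (v j) = 1" using good_B[OF g] sub by blast
  qed
qed

lemma card_cset: "3 \<le> k \<Longrightarrow> good k v \<Longrightarrow> card (cset k v) = 2 * k"
  using config_card config_of_good by blast

lemma XX_not_in:
  assumes g: "good k v" and k: "3 \<le> k" and p: "p \<in> XX k v"
  shows "pt p \<notin> cset k v"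
proof
  assume "pt p \<in> cset k v"
  then obtain i where i: "i \<in> {1..k}" "pt p = pt (v i) \<or> pt p = pt (v i + n0)"
    unfolding cset_def by blast
  have np: "nrm p" using p unfolding XX_def by blast
  have "p = v i \<or> p = v i + n0" using i pt_eq np good_nrm[OF g i(1)] nrm_n0 by blast
  then show False
  proof
    assume pe: "p = v i"
    have "B p (v i) = 1" using p i(1) unfolding XX_def by blast
    then show False using pe by simp
  next
    assume pe: "p = v i + n0"
    obtain l where l: "l \<in> {1..k}" "l \<noteq> i" using third_idx[OF k i(1) i(1)] by blast
    have "B p (v l) = 1" using p l unfolding XX_def by blast
    moreover have "B (v i + n0) (v l) = 0" using good_B[OF g i(1) l(1)] l good_nrm[OF g l(1)] nrm_Bn0
      by (simp add: B_add_left)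
    ultimately show False using pe by simp
  qed
qed

lemma cube_main:
  assumes g: "good 4 v" and X: "XX 4 v = {p, p'}" "p \<noteq> p'" "B p p' = 1"
  shows "{D. centric_config f H0 5 D \<and> cset 4 v \<subseteq> D} = {cset 4 v \<union> pair p, cset 4 v \<union> pair p'}"
    and "cset 4 v \<union> pair p \<noteq> cset 4 v \<union> pair p'"
    and "{E. centric_config f H0 6 E \<and> cset 4 v \<subseteq> E} = {cset 4 v \<union> pair p \<union> pair p'}"
proof -
  let ?C = "cset 4 v"
  have pX: "p \<in> XX 4 v" "p' \<in> XX 4 v" using X by auto
  have np: "nrm p" "nrm p'" using pX unfolding XX_def by auto
  have k4: "(3::nat) \<le> 4" by simp
  have fin: "finite (cset k u)" for k u unfolding cset_def by simp
  have cardC: "card ?C = 8" using card_cset[OF k4 g] by simp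
  have g5: "good 5 (v(5 := y))" if "y \<in> XX 4 v" for y
    using good_ext[OF g that] by (simp add: numeral_eq_Suc)
  have c5: "cset 5 (v(5 := y)) = ?C \<union> pair y" for y
    using cset_ext[of 4 v y] by (simp add: numeral_eq_Suc)
  have D5: "centric_config f H0 5 (?C \<union> pair y)" if "y \<in> XX 4 v" for y
    using config_of_good[of 5, OF _ g5[OF that]] c5 by simp
  have card5: "card (?C \<union> pair y) = 10" if "y \<in> XX 4 v" for y
    using config_card[OF D5[OF that]] by simp
  have p'X5: "p' \<in> XX 5 (v(5 := p))"
    unfolding XX_def using pX(2) np X(3) B_sym[of p' p] unfolding XX_def by auto
  have g6: "good 6 (v(5 := p, 6 := p'))"
    using good_ext[OF g5[OF pX(1)] p'X5] by (simp add: numeral_eq_Suc)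
  have c6: "cset 6 (v(5 := p, 6 := p')) = ?C \<union> pair p \<union> pair p'"
    using cset_ext[of 5 "v(5 := p)" p'] c5[of p] by (simp add: numeral_eq_Suc)
  have E6: "centric_config f H0 6 (?C \<union> pair p \<union> pair p')"
    using config_of_good[of 6, OF _ g6] c6 by simp
  have card6: "card (?C \<union> pair p \<union> pair p') = 12"
    using config_card[OF E6] by simp
  have step: "\<exists>y\<in>{p, p'}. P \<in> pair y \<and> pair y \<subseteq> D"
    if D: "centric_config f H0 m D" "?C \<subseteq> D" and P: "P \<in> D" "P \<notin> ?C" for m D P
  proof -
    obtain u where u: "good m u" "D = cset m u" using good_of_config[OF D(1)] by blast
    obtain y where y: "y \<in> XX 4 v" "P \<in> pair y"
      using ext_point[OF k4 g u(1)] D(2) P u(2) by blast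
    have "nrm y" using y(1) unfolding XX_def by blast
    then have "pair y \<subseteq> D" using pair_closed2[OF u(1)] y(2) P(1) u(2) by blast
    then show ?thesis using y X(1) by blast
  qed
  show "{D. centric_config f H0 5 D \<and> ?C \<subseteq> D} = {?C \<union> pair p, ?C \<union> pair p'}"
  proof (intro equalityI subsetI)
    fix D assume "D \<in> {D. centric_config f H0 5 D \<and> ?C \<subseteq> D}"
    then have D: "centric_config f H0 5 D" "?C \<subseteq> D" by auto
    have cD: "card D = 10" using config_card[OF D(1)] by simp
    then have finD: "finite D" by (intro card_ge_0_finite) simp
    have "D - ?C \<noteq> {}"
    proof
      assume "D - ?C = {}" then have "D = ?C" using D(2) by blast
      then show False using cD cardC by simp
    qed
    then obtain P where P: "P \<in> D" "P \<notin> ?C" by blast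
    obtain y where y: "y \<in> {p, p'}" "pair y \<subseteq> D" using step[OF D P] by blast
    have sub: "?C \<union> pair y \<subseteq> D" using D(2) y(2) by blast
    have "card (?C \<union> pair y) = card D" using card5 y(1) X(1) cD by auto
    then have "?C \<union> pair y = D" using card_subset_eq[OF finD sub] by blast
    then show "D \<in> {?C \<union> pair p, ?C \<union> pair p'}" using y(1) by blast
  next
    fix D assume "D \<in> {?C \<union> pair p, ?C \<union> pair p'}"
    then show "D \<in> {D. centric_config f H0 5 D \<and> ?C \<subseteq> D}" using D5 pX by auto
  qed
  show "?C \<union> pair p \<noteq> ?C \<union> pair p'"
  proof
    assume eq: "?C \<union> pair p = ?C \<union> pair p'"
    have "pt p \<in> ?C \<union> pair p'" using eq unfolding pair_def by blast
    moreover have "pt p \<notin> ?C" using XX_not_in[OF g k4 pX(1)] .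
    moreover have "pt p \<noteq> pt p'" using pt_eq np X(2) by blast
    moreover have "pt p \<noteq> pt (p' + n0)"
    proof
      assume "pt p = pt (p' + n0)"
      then have pe: "p = p' + n0" using pt_eq np nrm_n0 by blast
      have one: "(1::nat) \<in> {1..4}" by simp
      have "B p (v 1) = 1" "B p' (v 1) = 1" using pX one unfolding XX_def by blast+
      moreover have "B n0 (v 1) = 1" using good_nrm[OF g one] nrm_Bn0 by blast
      ultimately show False using pe by (simp add: B_add_left)
    qed
    ultimately show False unfolding pair_def by blast
  qed
  show "{E. centric_config f H0 6 E \<and> ?C \<subseteq> E} = {?C \<union> pair p \<union> pair p'}"
  proof (intro equalityI subsetI)
    fix E assume "E \<in> {E. centric_config f H0 6 E \<and> ?C \<subseteq> E}"
    then have E: "centric_config f H0 6 E" "?C \<subseteq> E" by auto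
    have cE: "card E = 12" using config_card[OF E(1)] by simp
    then have finE: "finite E" by (intro card_ge_0_finite) simp
    have "E - ?C \<noteq> {}"
    proof
      assume "E - ?C = {}" then have "E = ?C" using E(2) by blast
      then show False using cE cardC by simp
    qed
    then obtain P1 where P1: "P1 \<in> E" "P1 \<notin> ?C" by blast
    obtain y1 where y1: "y1 \<in> {p, p'}" "P1 \<in> pair y1" "pair y1 \<subseteq> E" using step[OF E P1] by blast
    have c1: "card (?C \<union> pair y1) = 10" using card5 y1(1) X(1) by auto
    have "E - (?C \<union> pair y1) \<noteq> {}"
    proof
      assume "E - (?C \<union> pair y1) = {}" then have "E = ?C \<union> pair y1" using E(2) y1(3) by blast
      then show False using cE c1 by simp
    qed
    then obtain P2 where P2: "P2 \<in> E" "P2 \<notin> ?C" "P2 \<notin> pair y1" by blast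
    obtain y2 where y2: "y2 \<in> {p, p'}" "P2 \<in> pair y2" "pair y2 \<subseteq> E" using step[OF E P2(1,2)] by blast
    have "y1 \<noteq> y2" using y2(2) P2(3) by blast
    then have "{y1, y2} = {p, p'}" using y1(1) y2(1) by auto
    then have "pair p \<union> pair p' = pair y1 \<union> pair y2" by auto
    then have sub: "?C \<union> pair p \<union> pair p' \<subseteq> E" using E(2) y1(3) y2(3) by auto
    have "card (?C \<union> pair p \<union> pair p') = card E" using card6 cE by simp
    then have "?C \<union> pair p \<union> pair p' = E" using card_subset_eq[OF finE sub] by blast
    then show "E \<in> {?C \<union> pair p \<union> pair p'}" by blast
  next
    fix E assume "E \<in> {?C \<union> pair p \<union> pair p'}"
    then show "E \<in> {E. centric_config f H0 6 E \<and> ?C \<subseteq> E}" using E6 by auto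
  qed
qed

end

locale X4 = geo f H0 n0 for f :: "'a::{field,finite} ^ 6 \<Rightarrow> 'a" and H0 n0 +
  fixes v :: "nat \<Rightarrow> 'a^6"
  assumes g4: "good 4 v"
begin

definition "v1 = v 1"
definition "v2 = v 2"
definition "v3 = v 3"
definition "v4 = v 4"

lemma nv: "nrm v1" "nrm v2" "nrm v3" "nrm v4"
  unfolding v1_def v2_def v3_def v4_def by (rule good_nrm[OF g4], simp)+

lemma fv: "f v1 = 0" "f v2 = 0" "f v3 = 0" "f v4 = 0"
  using nv unfolding nrm_def by auto

lemma Bvn: "B v1 n0 = 1" "B v2 n0 = 1" "B v3 n0 = 1" "B v4 n0 = 1"
  "B n0 v1 = 1" "B n0 v2 = 1" "B n0 v3 = 1" "B n0 v4 = 1"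
  using nv nrm_Bn0 unfolding nrm_def by auto

lemma Bvv0: "B v1 v2 = 1" "B v1 v3 = 1" "B v1 v4 = 1" "B v2 v3 = 1" "B v2 v4 = 1" "B v3 v4 = 1"
  unfolding v1_def v2_def v3_def v4_def by (rule good_B[OF g4], simp, simp, simp)+

lemma Bvv: "B v1 v2 = 1" "B v1 v3 = 1" "B v1 v4 = 1" "B v2 v3 = 1" "B v2 v4 = 1" "B v3 v4 = 1"
  "B v2 v1 = 1" "B v3 v1 = 1" "B v4 v1 = 1" "B v3 v2 = 1" "B v4 v2 = 1" "B v4 v3 = 1"
  using Bvv0 B_sym by metis+

lemmas base = fv Bvn Bvv fn0 B_add_left B_add_right B_smult_left B_smult_right f_add f_smult

definition "u = n0 + v1 + v2 + v3"
definition "z = v4 + u"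
definition "aa = n0 + v1 + v2"

definition orth where "orth x \<longleftrightarrow> B x n0 = 0 \<and> B x v1 = 0 \<and> B x v2 = 0 \<and> B x v3 = 0"

lemma orth_B: "orth x \<Longrightarrow> B x n0 = 0 \<and> B x v1 = 0 \<and> B x v2 = 0 \<and> B x v3 = 0 \<and>
   B n0 x = 0 \<and> B v1 x = 0 \<and> B v2 x = 0 \<and> B v3 x = 0 \<and> B x u = 0 \<and> B u x = 0 \<and> B x aa = 0 \<and> B aa x = 0"
  unfolding orth_def u_def aa_def by (simp add: B_add_right B_add_left B_sym[of _ x])

lemma fu: "f u = 1" unfolding u_def by (simp add: base)
lemma Bu: "B u n0 = 1" "B u v1 = 1" "B u v2 = 1" "B u v3 = 1" "B u v4 = 0"
   "B n0 u = 1" "B v1 u = 1" "B v2 u = 1" "B v3 u = 1" "B v4 u = 0"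
  unfolding u_def by (simp_all add: base)
lemma orth_z: "orth z" unfolding orth_def z_def by (simp add: base Bu)
lemma fz: "f z = 1" unfolding z_def by (simp add: base Bu fu)
lemma Bz: "B z z = 0" "B z u = 0" "B u z = 0" "B z v4 = 0" "B v4 z = 0"
  unfolding z_def by (simp_all add: base Bu)
lemma faa: "f aa = 0" unfolding aa_def by (simp add: base)
lemma Baa: "B v1 aa = 0" "B aa v1 = 0" "B aa v2 = 0" "B aa v3 = 1"
  unfolding aa_def by (simp_all add: base)

lemma z_ne: "z \<noteq> 0" using fz by auto

lemma orth_add: "orth x \<Longrightarrow> orth y \<Longrightarrow> orth (x + y)"
  unfolding orth_def by (simp add: B_add_left)
lemma orth_smult: "orth x \<Longrightarrow> orth (c *s x)"
  unfolding orth_def by (simp add: B_smult_left)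

lemma TS3:
  assumes ft: "f t = 0" and t1: "B t v1 = 0" and ta: "B t aa = 0"
    and nsp: "\<And>\<alpha> \<beta>. t \<noteq> \<alpha> *s v1 + \<beta> *s aa"
  shows False
proof -
  define U where "U i = (if i = (0::nat) then v1 else if i = 1 then aa else t)" for i
  have s3: "(\<Sum>i<3. c i *s U i) = c 0 *s v1 + c (Suc 0) *s aa + c (Suc (Suc 0)) *s t" for c
    by (simp add: numeral_3_eq_3 U_def)
  have "ts_subspace_dim f 3"
    unfolding ts_subspace_dim_def
  proof (intro exI[of _ U] conjI allI impI)
    fix c i assume h: "(\<Sum>i<3. c i *s U i) = 0" and i3: "(i::nat) < 3"
    then have e: "c 0 *s v1 + c (Suc 0) *s aa + c (Suc (Suc 0)) *s t = 0" using s3 by simp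
    have c2: "c (Suc (Suc 0)) = 0"
    proof (rule ccontr)
      assume c2: "c (Suc (Suc 0)) \<noteq> 0"
      have "c (Suc (Suc 0)) *s t = c 0 *s v1 + c (Suc 0) *s aa"
        using e by (simp add: vsum0_iff add.commute)
      then have "(1 / c (Suc (Suc 0))) *s (c (Suc (Suc 0)) *s t) = (1 / c (Suc (Suc 0))) *s (c 0 *s v1 + c (Suc 0) *s aa)" by simp
      then have "t = (c 0 / c (Suc (Suc 0))) *s v1 + (c (Suc 0) / c (Suc (Suc 0))) *s aa"
        using c2 by (simp add: vector_smult_assoc vector_add_ldistrib)
      then show False using nsp by blast
    qed
    then have e2: "c 0 *s v1 + c (Suc 0) *s aa = 0" using e by simp
    have "B (c 0 *s v1 + c (Suc 0) *s aa) v2 = 0" using e2 by simp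
    then have c0: "c 0 = 0" by (simp add: base Baa)
    have "B (c 0 *s v1 + c (Suc 0) *s aa) v3 = 0" using e2 by simp
    then have c1: "c (Suc 0) = 0" using c0 by (simp add: base Baa)
    have "i = 0 \<or> i = Suc 0 \<or> i = Suc (Suc 0)" using i3 by auto
    then show "c i = 0" using c0 c1 c2 by auto
  next
    fix c
    have Btv1: "B v1 t = 0" "B aa t = 0" using t1 ta by (simp_all add: B_sym[of _ t])
    show "f (\<Sum>i<3. c i *s U i) = 0"
      unfolding s3 by (simp add: base faa Baa ft t1 ta Btv1)
  qed
  then show False using nots3 by blast
qed

definition Pj where "Pj x = (B x v1 + B x v2 + B x v3) *s n0 + (B x n0 + B x v2 + B x v3) *s v1
   + (B x n0 + B x v1 + B x v3) *s v2 + (B x n0 + B x v1 + B x v2) *s v3"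

lemma orth_proj: "orth (x + Pj x)"
  unfolding orth_def Pj_def by (simp add: base algebra_simps)

lemma card_q: "card (UNIV :: 'a set) \<ge> 2"
proof -
  have "{0::'a, 1} \<subseteq> UNIV" by simp
  then have "card {0::'a, 1} \<le> card (UNIV :: 'a set)" by (intro card_mono) simp_all
  then show ?thesis by simp
qed

lemma span5_not_univ: "\<exists>x. \<forall>a b c d e. x \<noteq> a *s n0 + b *s v1 + c *s v2 + d *s v3 + e *s z"
proof (rule ccontr)
  assume "\<not> ?thesis"
  then have all: "\<forall>x. \<exists>a b c d e. x = a *s n0 + b *s v1 + c *s v2 + d *s v3 + e *s z" by blast
  define g where "g = (\<lambda>(a::'a,b::'a,c::'a,d::'a,e::'a). a *s n0 + b *s v1 + c *s v2 + d *s v3 + e *s z)"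
  have "UNIV \<subseteq> range g"
  proof
    fix x :: "'a^6"
    obtain a b c d e where "x = a *s n0 + b *s v1 + c *s v2 + d *s v3 + e *s z" using all by blast
    then have "x = g (a,b,c,d,e)" unfolding g_def by simp
    then show "x \<in> range g" by blast
  qed
  then have "card (UNIV :: ('a^6) set) \<le> card (range g)" by (intro card_mono) simp_all
  also have "\<dots> \<le> card (UNIV :: ('a \<times> 'a \<times> 'a \<times> 'a \<times> 'a) set)" by (rule card_image_le) simp
  also have "\<dots> = card (UNIV :: 'a set) ^ 5" by (simp add: eval_nat_numeral)
  finally have "card (UNIV :: 'a set) ^ 6 \<le> card (UNIV :: 'a set) ^ 5" by simp
  moreover have "card (UNIV :: 'a set) ^ 5 < card (UNIV :: 'a set) ^ 6"
    using card_q by (intro power_strict_increasing) auto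
  ultimately show False by simp
qed

lemma exw: "\<exists>w. orth w \<and> B z w = 1"
proof (rule ccontr)
  assume H: "\<not> (\<exists>w. orth w \<and> B z w = 1)"
  have H0': "B z w = 0" if "orth w" for w
  proof (rule ccontr)
    assume c: "B z w \<noteq> 0"
    have "orth ((1 / B z w) *s w)" using orth_smult that by blast
    moreover have "B z ((1 / B z w) *s w) = 1" using c by (simp add: B_smult_right)
    ultimately show False using H by blast
  qed
  obtain x where x: "\<forall>a b c d e. x \<noteq> a *s n0 + b *s v1 + c *s v2 + d *s v3 + e *s z"
    using span5_not_univ by blast
  define y where "y = x + Pj x"
  have oy: "orth y" unfolding y_def by (rule orth_proj)
  have ny: "y \<noteq> c *s z" for c
  proof
    assume "y = c *s z"
    then have "x + Pj x = c *s z" unfolding y_def .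
    then have "x = Pj x + c *s z" by (subst vadd_cancel)
    then show False using x unfolding Pj_def by blast
  qed
  have Byz: "B y z = 0" using H0'[OF oy] B_sym by metis
  obtain r where r: "r^2 = f y" using c2_sqrt[OF char2] by blast
  define t where "t = y + r *s z"
  have ft: "f t = 0" unfolding t_def by (simp add: f_add f_smult fz Byz r B_smult_right)
  have t1: "B t v1 = 0" "B t aa = 0" "B t v2 = 0" "B t v3 = 0"
    unfolding t_def using orth_B[OF oy] orth_B[OF orth_z] by (simp_all add: B_add_left B_smult_left)
  show False
  proof (rule TS3[OF ft t1(1,2)])
    fix \<alpha> \<beta>
    show "t \<noteq> \<alpha> *s v1 + \<beta> *s aa"
    proof
      assume e: "t = \<alpha> *s v1 + \<beta> *s aa"
      have "B (\<alpha> *s v1 + \<beta> *s aa) v2 = 0" using e t1 by simp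
      then have a0: "\<alpha> = 0" by (simp add: base Baa)
      have "B (\<alpha> *s v1 + \<beta> *s aa) v3 = 0" using e t1 by simp
      then have b0: "\<beta> = 0" using a0 by (simp add: base Baa)
      have "y + r *s z = 0" using e a0 b0 unfolding t_def by simp
      then have "y = r *s z" by (simp add: vsum0_iff)
      then show False using ny by blast
    qed
  qed
qed

definition ww where "ww = (SOME w. orth w \<and> B z w = 1)"

lemma ww: "orth ww" "B z ww = 1" "B ww z = 1"
  using someI_ex[OF exw] B_sym unfolding ww_def by metis+

lemma Bww: "B ww ww = 0" "B ww u = 0" "B u ww = 0" "B ww v4 = 1" "B v4 ww = 1"
  "B ww n0 = 0" "B n0 ww = 0" "B ww v1 = 0" "B v1 ww = 0" "B ww v2 = 0" "B v2 ww = 0"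
  "B ww v3 = 0" "B v3 ww = 0"
proof -
  have v4e: "v4 = z + u" unfolding z_def by (simp add: add.assoc)
  show "B ww ww = 0" by simp
  show "B ww u = 0" "B u ww = 0" using orth_B[OF ww(1)] by auto
  show "B ww v4 = 1" unfolding v4e using orth_B[OF ww(1)] ww by (simp add: B_add_right)
  then show "B v4 ww = 1" using B_sym by metis
  show "B ww n0 = 0" "B n0 ww = 0" "B ww v1 = 0" "B v1 ww = 0" "B ww v2 = 0" "B v2 ww = 0"
    "B ww v3 = 0" "B v3 ww = 0" using orth_B[OF ww(1)] by auto
qed

lemma decomp:
  assumes ox: "orth x"
  shows "x = B x ww *s z + B x z *s ww"
proof -
  define r where "r = x + B x ww *s z + B x z *s ww"
  have orr: "orth r" unfolding r_def using ox orth_z ww(1) orth_add orth_smult by metis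
  have rz: "B r z = 0" "B z r = 0" unfolding r_def using ww Bz
    by (simp_all add: B_add_left B_add_right B_smult_left B_smult_right B_sym[of z x])
  have rw: "B r ww = 0" unfolding r_def using ww Bww
    by (simp add: B_add_left B_smult_left)
  have r0: "r = 0"
  proof (rule ccontr)
    assume rne: "r \<noteq> 0"
    have nsp0: "\<And>\<alpha> \<beta>. r \<noteq> \<alpha> *s v1 + \<beta> *s aa"
    proof
      fix \<alpha> \<beta> assume e: "r = \<alpha> *s v1 + \<beta> *s aa"
      have "B (\<alpha> *s v1 + \<beta> *s aa) v2 = 0" using e orth_B[OF orr] by simp
      then have a0: "\<alpha> = 0" by (simp add: base Baa)
      have "B (\<alpha> *s v1 + \<beta> *s aa) v3 = 0" using e orth_B[OF orr] by simp
      then have b0: "\<beta> = 0" using a0 by (simp add: base Baa)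
      show False using e a0 b0 rne by simp
    qed
    show False
    proof (cases "f r = 0")
      case True
      show False by (rule TS3[OF True _ _ nsp0]) (use orth_B[OF orr] in auto)
    next
      case False
      obtain c where c: "c^2 = 1 / f r" using c2_sqrt[OF char2] by blast
      define t where "t = z + c *s r"
      have ft: "f t = 0" unfolding t_def using c False rz
        by (simp add: f_add f_smult fz B_smult_right)
      have t1: "B t v1 = 0" "B t aa = 0"
        unfolding t_def using orth_B[OF orr] orth_B[OF orth_z] by (simp_all add: B_add_left B_smult_left)
      show False
      proof (rule TS3[OF ft t1])
        fix \<alpha> \<beta>
        show "t \<noteq> \<alpha> *s v1 + \<beta> *s aa"
        proof
          assume e: "t = \<alpha> *s v1 + \<beta> *s aa"
          have "B t ww = 1" unfolding t_def using ww rw by (simp add: B_add_left B_smult_left)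
          moreover have "B (\<alpha> *s v1 + \<beta> *s aa) ww = 0" using orth_B[OF ww(1)] Bww
            by (simp add: B_add_left B_smult_left B_sym[of aa ww])
          ultimately show False using e by simp
        qed
      qed
    qed
  qed
  then show ?thesis unfolding r_def by (simp add: vsum0_iff add.assoc)
qed

lemma fww_not: "a^2 + a \<noteq> f ww"
proof
  assume h: "a^2 + a = f ww"
  define t where "t = a *s z + ww"
  have "f t = a^2 + f ww + a" unfolding t_def using ww
    by (simp add: f_add f_smult fz B_smult_left)
  also have "\<dots> = (a^2 + a) + f ww" by (simp add: algebra_simps)
  also have "\<dots> = 0" using h by simp
  finally have ft: "f t = 0" .
  have t1: "B t v1 = 0" "B t aa = 0"
    unfolding t_def using orth_B[OF ww(1)] orth_B[OF orth_z] by (simp_all add: B_add_left B_smult_left)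
  show False
  proof (rule TS3[OF ft t1])
    fix \<alpha> \<beta>
    show "t \<noteq> \<alpha> *s v1 + \<beta> *s aa"
    proof
      assume e: "t = \<alpha> *s v1 + \<beta> *s aa"
      have "B t z = 1" unfolding t_def using ww Bz by (simp add: B_add_left B_smult_left)
      moreover have "B (\<alpha> *s v1 + \<beta> *s aa) z = 0" using orth_B[OF orth_z]
        by (simp add: B_add_left B_smult_left B_sym[of aa z] B_sym[of v1 z])
      ultimately show False using e by simp
    qed
  qed
qed

lemma ex_a1: "\<exists>a1. a1^2 + a1 = 1 + f ww"
  using T_index2[OF char2] noT1 fww_not by blast

definition "qv b = u + b *s z + ww"

lemma fq: "f (qv b) = 1 + b^2 + b + f ww"
  unfolding qv_def using ww Bww Bz fu fz
  by (simp add: f_add f_smult B_add_left B_add_right B_smult_left B_smult_right algebra_simps)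

lemma Bq: "B (qv b) n0 = 1" "B (qv b) v1 = 1" "B (qv b) v2 = 1" "B (qv b) v3 = 1" "B (qv b) v4 = 1"
  unfolding qv_def using ww Bww Bz Bu orth_B[OF orth_z]
  by (simp_all add: B_add_left B_smult_left)

lemma XX_iff: "y \<in> XX 4 v \<longleftrightarrow> nrm y \<and> B y v1 = 1 \<and> B y v2 = 1 \<and> B y v3 = 1 \<and> B y v4 = 1"
proof -
  have "{1..4::nat} = {1,2,3,4}" by auto
  then show ?thesis unfolding XX_def v1_def v2_def v3_def v4_def by auto
qed

lemma q_in: assumes "b^2 + b = 1 + f ww" shows "qv b \<in> XX 4 v"
proof -
  have "1 + b^2 + b + f ww = (b^2 + b) + (1 + f ww)" by (simp add: algebra_simps)
  also have "\<dots> = 0" using assms by simp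
  finally have "f (qv b) = 0" unfolding fq .
  then show ?thesis unfolding XX_iff nrm_def using Bq by simp
qed

lemma XX_sub: assumes y: "y \<in> XX 4 v" shows "\<exists>b. b^2 + b = 1 + f ww \<and> y = qv b"
proof -
  have yv: "f y = 0" "B y n0 = 1" "B y v1 = 1" "B y v2 = 1" "B y v3 = 1" "B y v4 = 1"
    using y unfolding XX_iff nrm_def by auto
  define x where "x = y + u"
  have ox: "orth x" unfolding orth_def x_def using yv Bu by (simp add: B_add_left)
  have "B y z = 1" unfolding z_def u_def using yv by (simp add: B_add_right)
  then have xz: "B x z = 1" unfolding x_def using Bz by (simp add: B_add_left)
  define b where "b = B x ww"
  have xb: "x = b *s z + ww" using decomp[OF ox] xz unfolding b_def by simp
  have "y = x + u" unfolding x_def by (simp add: add.assoc)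
  also have "\<dots> = u + b *s z + ww" unfolding xb by (simp add: add.commute add.left_commute)
  finally have yq: "y = qv b" unfolding qv_def .
  have "f (qv b) = 0" using yq yv by simp
  then have "1 + b^2 + b + f ww = 0" unfolding fq .
  moreover have "1 + b^2 + b + f ww = (b^2 + b) + (1 + f ww)" by (simp add: algebra_simps)
  ultimately have "b^2 + b = 1 + f ww" using sum0_iff by metis
  with yq show ?thesis by blast
qed

lemma Xlemma: "\<exists>p p'. XX 4 v = {p, p'} \<and> p \<noteq> p' \<and> B p p' = 1"
proof -
  obtain a1 where a1: "a1^2 + a1 = 1 + f ww" using ex_a1 by blast
  have a1': "(a1 + 1)^2 + (a1 + 1) = 1 + f ww" using a1 c2_sq_add[OF char2, of a1 1]
    by (simp add: algebra_simps)
  have eq: "XX 4 v = {qv a1, qv (a1 + 1)}"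
  proof (intro equalityI subsetI)
    fix y assume "y \<in> XX 4 v"
    then obtain b where b: "b^2 + b = 1 + f ww" "y = qv b" using XX_sub by blast
    have "(b + a1)^2 + (b + a1) = (b^2 + b) + (a1^2 + a1)" using c2_sq_add[OF char2, of b a1]
      by (simp add: algebra_simps)
    also have "\<dots> = 0" using b(1) a1 by simp
    finally have "(b + a1) * (b + a1 + 1) = 0" by (simp add: power2_eq_square algebra_simps)
    then have "b + a1 = 0 \<or> b + a1 + 1 = 0" by simp
    then have "b = a1 \<or> b = a1 + 1" by (auto simp: sum0_iff add.assoc)
    then show "y \<in> {qv a1, qv (a1 + 1)}" using b(2) by auto
  next
    fix y assume "y \<in> {qv a1, qv (a1 + 1)}"
    then show "y \<in> XX 4 v" using q_in a1 a1' by auto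
  qed
  have qq: "qv (a1 + 1) = qv a1 + z" unfolding qv_def by (simp add: vector_sadd_rdistrib algebra_simps)
  have ne: "qv a1 \<noteq> qv (a1 + 1)" unfolding qq using z_ne by simp
  have "B (qv a1) (qv a1 + z) = 1" unfolding qv_def using ww Bz
    by (simp add: B_add_left B_add_right B_smult_left)
  then have "B (qv a1) (qv (a1 + 1)) = 1" unfolding qq .
  with eq ne show ?thesis by blast
qed

end

lemma (in geo) X_good4: "good 4 v \<Longrightarrow> \<exists>p p'. XX 4 v = {p, p'} \<and> p \<noteq> p' \<and> B p p' = 1"
proof -
  assume g: "good 4 v"
  interpret X4 f H0 n0 v by unfold_locales (rule g)
  show ?thesis by (rule Xlemma)
qed


context qf
begin

lemma B_sum: "B x (\<Sum>i\<in>A. g i) = (\<Sum>i\<in>A. B x (g i))"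
proof (induction A rule: infinite_finite_induct)
  case (infinite A) then show ?case by simp
next
  case empty then show ?case by simp
next
  case (insert a A) then show ?case by (simp add: B_add_right)
qed

lemma B_expand: "B x w = (\<Sum>j\<in>UNIV. w$j * B x (axis j 1))"
proof -
  have "B x w = B x (\<Sum>j\<in>UNIV. w$j *s axis j 1)" by (simp add: basis_expansion)
  also have "\<dots> = (\<Sum>j\<in>UNIV. w$j * B x (axis j 1))" by (simp add: B_sum B_smult_right)
  finally show ?thesis .
qed

lemma adj_of_B0:
  assumes P: "pt v \<in> Xhat_points f H0" and R: "pt w \<in> Xhat_points f H0"
    and v: "v \<noteq> 0" "f v = 0" and w: "w \<noteq> 0" "f w = 0"
    and ne: "pt v \<noteq> pt w" and b: "B v w = 0"
  shows "Xhat_adj f H0 (pt v) (pt w)"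
proof -
  let ?L = "join (pt v) (pt w)"
  have pp: "pt v \<in> proj_points" "pt w \<in> proj_points"
    unfolding proj_points_def using v w by blast+
  have sing: "\<forall>x\<in>?L. f x = 0"
  proof
    fix x assume "x \<in> ?L"
    then obtain a b where "x = a *s v + b *s w" unfolding join_mem by blast
    then show "f x = 0" using v w b by (simp add: f_add f_smult B_smult_left B_smult_right)
  qed
  have Lts: "?L \<in> ts_lines f" unfolding ts_lines_def using pp ne sing by blast
  have sub1: "pt v \<subseteq> ?L"
  proof
    fix x assume "x \<in> pt v"
    then obtain c where "x = c *s v" unfolding pt_mem by blast
    then have "x = c *s v + 0 *s w" by simp
    then show "x \<in> ?L" unfolding join_mem by blast
  qed
  have sub2: "pt w \<subseteq> ?L"
  proof
    fix x assume "x \<in> pt w"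
    then obtain c where "x = c *s w" unfolding pt_mem by blast
    then have "x = 0 *s v + c *s w" by simp
    then show "x \<in> ?L" unfolding join_mem by blast
  qed
  have "\<not> pt v \<subseteq> H0" using P unfolding Xhat_points_def by blast
  then have "\<not> ?L \<subseteq> H0" using sub1 by blast
  then show ?thesis unfolding Xhat_adj_def using P R ne Lts sub1 sub2 by blast
qed

lemma sing_rep: "P \<in> Xhat_points f H0 \<Longrightarrow> \<exists>v. v \<noteq> 0 \<and> f v = 0 \<and> P = pt v"
  unfolding Xhat_points_def sing_points_def by blast

lemma config_parts:
  assumes cfg: "centric_config f H0 k S"
  shows "\<exists>x :: nat \<Rightarrow> nat \<Rightarrow> ('a^6) set. S = {x i a | i a. i \<in> {1..k} \<and> a \<in> {1,2}} \<and>
        S \<subseteq> Xhat_points f H0 \<and>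
        (\<forall>i\<in>{1..k}. \<forall>j\<in>{1..k}. \<forall>a\<in>{1,2}. \<forall>b\<in>{1,2}.
            Xhat_adj f H0 (x i a) (x j b) \<longleftrightarrow> i \<noteq> j \<and> a \<noteq> b) \<and>
        (\<forall>i\<in>{1..k}. perp f H0 \<subseteq> join (x i 1) (x i 2))"
proof -
  from cfg[unfolded centric_config_def] obtain x :: "nat \<Rightarrow> nat \<Rightarrow> ('a^6) set" where
    H: "S = {x i a | i a. i \<in> {1..k} \<and> a \<in> {1,2}} \<and>
        card S = 2 * k \<and>
        S \<subseteq> Xhat_points f H0 \<and>
        (\<forall>i\<in>{1..k}. \<forall>j\<in>{1..k}. \<forall>a\<in>{1,2}. \<forall>b\<in>{1,2}.
            Xhat_adj f H0 (x i a) (x j b) \<longleftrightarrow> i \<noteq> j \<and> a \<noteq> b) \<and>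
        (\<forall>i\<in>{1..k}. perp f H0 \<subseteq> join (x i 1) (x i 2))" ..
  then show ?thesis by (intro exI[of _ x]) (elim conjE, intro conjI)
qed

lemma derive_n0:
  assumes hyp: "is_hyperplane H0" and nd: "nondeg_on H0 f"
    and cfg: "centric_config f H0 k S" and k2: "2 \<le> k"
  shows "\<exists>n0. f n0 = 1 \<and> perp f H0 = pt n0 \<and> (\<forall>x. x \<in> H0 \<longleftrightarrow> B x n0 = 0)"
proof -
  obtain x :: "nat \<Rightarrow> nat \<Rightarrow> ('a^6) set" where
    H: "S = {x i a | i a. i \<in> {1..k} \<and> a \<in> {1,2}} \<and>
        S \<subseteq> Xhat_points f H0 \<and>
        (\<forall>i\<in>{1..k}. \<forall>j\<in>{1..k}. \<forall>a\<in>{1,2}. \<forall>b\<in>{1,2}.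
            Xhat_adj f H0 (x i a) (x j b) \<longleftrightarrow> i \<noteq> j \<and> a \<noteq> b) \<and>
        (\<forall>i\<in>{1..k}. perp f H0 \<subseteq> join (x i 1) (x i 2))"
    using config_parts[OF cfg] ..
  have Sx: "S = {x i a | i a. i \<in> {1..k} \<and> a \<in> {1,2}}" using H by (elim conjE)
  have sub: "S \<subseteq> Xhat_points f H0" using H by (elim conjE)
  have adj: "\<forall>i\<in>{1..k}. \<forall>j\<in>{1..k}. \<forall>a\<in>{1,2}. \<forall>b\<in>{1,2}.
            Xhat_adj f H0 (x i a) (x j b) \<longleftrightarrow> i \<noteq> j \<and> a \<noteq> b" using H by (elim conjE)
  have perp: "\<forall>i\<in>{1..k}. perp f H0 \<subseteq> join (x i 1) (x i 2)" using H by (elim conjE)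
  have i12: "(1::nat) \<in> {1..k}" "(2::nat) \<in> {1..k}" using k2 by auto
  have ab12: "(1::nat) \<in> {1,2}" "(2::nat) \<in> {1,2}" by auto
  have xX: "x i a \<in> Xhat_points f H0" if "i \<in> {1..k}" "a \<in> {1,2}" for i a
    using that sub unfolding Sx by blast
  have a1: "Xhat_adj f H0 (x 2 1) (x 1 2)" using adj i12 ab12 by simp
  have a2: "\<not> Xhat_adj f H0 (x 2 1) (x 1 1)" using adj i12 ab12 by simp
  have a3: "\<not> Xhat_adj f H0 (x 1 1) (x 1 2)" using adj i12 ab12 by simp
  have a4: "\<not> Xhat_adj f H0 (x 1 1) (x 2 1)" using adj i12 ab12 by simp
  have a5: "\<not> Xhat_adj f H0 (x 1 2) (x 1 2)" using adj i12 ab12 by simp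
  have d11_12: "x 1 1 \<noteq> x 1 2" using a1 a2 by metis
  have d11_21: "x 1 1 \<noteq> x 2 1" using a1 a3 by metis
  have p1: "perp f H0 \<subseteq> join (x 1 1) (x 1 2)" using perp i12 by blast
  obtain h :: "'a^6" where h: "h \<noteq> 0" and H0d: "H0 = {v. (\<Sum>i\<in>UNIV. h$i * v$i) = 0}"
    using hyp unfolding is_hyperplane_def by blast
  obtain k0 where k0: "h$k0 \<noteq> 0" using h by (metis vec_eq_iff zero_index)
  define \<phi> where "\<phi> y = (\<chi> j. B y (axis j 1) * h$k0 + B y (axis k0 1) * h$j)" for y
  have \<phi>k0: "\<phi> y $ k0 = 0" for y unfolding \<phi>_def by (simp add: mult.commute)
  have \<phi>add: "\<phi> (y + y') = \<phi> y + \<phi> y'" for y y'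
    unfolding \<phi>_def by (simp add: vec_eq_iff B_add_left algebra_simps)
  have ninj: "\<not> inj \<phi>"
  proof
    assume "inj \<phi>"
    then have "card (range \<phi>) = card (UNIV :: ('a^6) set)" by (simp add: card_image)
    then have "range \<phi> = UNIV" by (simp add: card_eq_UNIV_imp_eq_UNIV)
    then obtain y where "\<phi> y = axis k0 1" by (metis UNIV_I imageE)
    then have "\<phi> y $ k0 = 1" by simp
    then show False using \<phi>k0 by simp
  qed
  then obtain y y' where yy: "y \<noteq> y'" "\<phi> y = \<phi> y'" unfolding inj_def by blast
  define m where "m = y + y'"
  have m0: "m \<noteq> 0" unfolding m_def using yy(1) vsum0_iff by blast
  have \<phi>m: "\<phi> m = 0" unfolding m_def \<phi>add yy(2) by simp
  have mj: "h$k0 * B m (axis j 1) = B m (axis k0 1) * h$j" for j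
  proof -
    have "\<phi> m $ j = 0" using \<phi>m by simp
    then have "B m (axis j 1) * h$k0 + B m (axis k0 1) * h$j = 0" unfolding \<phi>_def by simp
    then show ?thesis using sum0_iff by (metis mult.commute)
  qed
  have mperp: "B m w = 0" if "w \<in> H0" for w
  proof -
    have hw: "(\<Sum>i\<in>UNIV. h$i * w$i) = 0" using that H0d by blast
    have "h$k0 * B m w = (\<Sum>j\<in>UNIV. w$j * (h$k0 * B m (axis j 1)))"
      unfolding B_expand[of m w] by (simp add: sum_distrib_left algebra_simps)
    also have "\<dots> = (\<Sum>j\<in>UNIV. B m (axis k0 1) * (h$j * w$j))" unfolding mj
      by (simp add: algebra_simps)
    also have "\<dots> = 0" using hw by (simp add: sum_distrib_left[symmetric])
    finally show ?thesis using k0 by simp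
  qed
  obtain w1 where w1: "w1 \<noteq> 0" "f w1 = 0" "x 1 1 = pt w1" using sing_rep xX i12 ab12 by metis
  obtain w2 where w2: "w2 \<noteq> 0" "f w2 = 0" "x 1 2 = pt w2" using sing_rep xX i12 ab12 by metis
  have B12: "B w1 w2 \<noteq> 0"
  proof
    assume "B w1 w2 = 0"
    then have "Xhat_adj f H0 (pt w1) (pt w2)"
      using adj_of_B0 xX[OF i12(1) ab12(1)] xX[OF i12(1) ab12(2)] w1 w2 d11_12 by metis
    then show False using a3 w1 w2 by simp
  qed
  have mperpH: "m \<in> perp f H0" unfolding perp_def using mperp by blast
  then have "m \<in> join (pt w1) (pt w2)" using p1 w1 w2 by auto
  then obtain \<alpha> \<beta> where mab: "m = \<alpha> *s w1 + \<beta> *s w2" unfolding join_mem by blast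
  have nrad: "\<exists>y. B m y \<noteq> 0"
  proof (rule ccontr)
    assume "\<not> ?thesis"
    then have "B m w1 = 0" "B m w2 = 0" by auto
    then have "\<beta> * B w2 w1 = 0" "\<alpha> * B w1 w2 = 0" unfolding mab
      by (simp_all add: B_add_left B_smult_left)
    then have "\<alpha> = 0" "\<beta> = 0" using B12 B_sym[of w2 w1] by auto
    then show False using m0 mab by simp
  qed
  have H0m: "z \<in> H0 \<longleftrightarrow> B z m = 0" for z
  proof
    assume "z \<in> H0" then show "B z m = 0" using mperp B_sym by metis
  next
    assume zm: "B z m = 0"
    show "z \<in> H0"
    proof (rule ccontr)
      assume zn: "z \<notin> H0"
      define d where "d = (\<Sum>i\<in>UNIV. h$i * z$i)"
      have d0: "d \<noteq> 0" using zn H0d unfolding d_def by blast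
      have "B m y = 0" for y
      proof -
        define c where "c = (\<Sum>i\<in>UNIV. h$i * y$i) / d"
        have "y + c *s z \<in> H0"
        proof -
          have "(\<Sum>i\<in>UNIV. h$i * (y + c *s z)$i) = (\<Sum>i\<in>UNIV. h$i * y$i) + c * d"
            unfolding d_def by (simp add: algebra_simps sum.distrib sum_distrib_left)
          also have "\<dots> = 0" unfolding c_def using d0 by simp
          finally show ?thesis using H0d by blast
        qed
        then have "B m (y + c *s z) = 0" using mperp by blast
        moreover have "B m z = 0" using zm B_sym by metis
        ultimately show ?thesis by (simp add: B_add_right B_smult_right)
      qed
      then show False using nrad by blast
    qed
  qed
  have mH0: "m \<in> H0" unfolding H0m by simp
  have fm: "f m \<noteq> 0"
  proof
    assume "f m = 0"
    then have "\<not> (\<forall>w\<in>H0. polar f m w = 0)" using nd mH0 m0 unfolding nondeg_on_def by blast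
    then show False using mperp by blast
  qed
  obtain s where s: "s^2 = 1 / f m" using c2_sqrt[OF char2] by blast
  have s0: "s \<noteq> 0" using s fm by auto
  define n0 where "n0 = s *s m"
  have fn0: "f n0 = 1" unfolding n0_def using s fm by (simp add: f_smult)
  have H0n: "z \<in> H0 \<longleftrightarrow> B z n0 = 0" for z
    unfolding n0_def H0m using s0 by (simp add: B_smult_right)
  interpret g0: geo0 f H0 n0 by unfold_locales (use fn0 H0n in auto)
  have sup: "pt n0 \<subseteq> perp f H0"
  proof
    fix y assume "y \<in> pt n0"
    then obtain c where "y = c *s n0" unfolding pt_mem by blast
    then show "y \<in> perp f H0" unfolding perp_def n0_def using mperp
      by (simp add: B_smult_left)
  qed
  have subp: "perp f H0 \<subseteq> pt n0"
  proof
    fix y assume yp: "y \<in> perp f H0"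
    obtain w where w: "g0.nrm w" "x 1 1 = pt w" using g0.Xhat_nrm xX i12 ab12 by metis
    obtain w' where w': "g0.nrm w'" "x 1 2 = pt w'" using g0.Xhat_nrm xX i12 ab12 by metis
    obtain w3 where w3: "g0.nrm w3" "x 2 1 = pt w3" using g0.Xhat_nrm xX i12 ab12 by metis
    have "n0 \<in> perp f H0" using sup pt_self by blast
    then have "n0 \<in> join (pt w) (pt w')" using p1 w w' by auto
    then have ww': "w' = w + n0" using g0.pair_partner w(1) w'(1) by blast
    have "y \<in> join (pt w) (pt (w + n0))" using yp p1 w w' ww' by auto
    then obtain \<alpha> \<beta> where yab: "y = \<alpha> *s w + \<beta> *s (w + n0)" unfolding join_mem by blast
    have Bw3: "B w w3 \<noteq> 0"
    proof
      assume b0: "B w w3 = 0"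
      have "w \<noteq> w3" using d11_21 w w3 by auto
      then have "Xhat_adj f H0 (pt w) (pt w3)" using g0.adj_iff w(1) w3(1) b0 by blast
      then show False using a4 w w3 by simp
    qed
    have "w + w3 \<in> H0" unfolding H0n using w(1) w3(1) unfolding g0.nrm_def by (simp add: B_add_left)
    then have "B y (w + w3) = 0" using yp unfolding perp_def by blast
    moreover have "B y (w + w3) = (\<alpha> + \<beta>) * B w w3"
      unfolding yab using w(1) w3(1) g0.nrm_Bn0 unfolding g0.nrm_def
      by (simp add: B_add_left B_add_right B_smult_left algebra_simps)
    ultimately have "\<alpha> + \<beta> = 0" using Bw3 by simp
    then have "\<beta> = \<alpha>" using sum0_iff by metis
    then have "y = \<alpha> *s n0" unfolding yab by (simp add: vector_add_ldistrib)
    then show "y \<in> pt n0" unfolding pt_mem by blast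
  qed
  show ?thesis using fn0 sup subp H0n by blast
qed

end


theorem corollary3p12:
  fixes f :: "'a::{field,finite} ^ 6 \<Rightarrow> 'a"
    and H0 :: "('a ^ 6) set"
    and n :: nat
  assumes "CARD('a) = 2 ^ n"
    and "odd n"
    and "quadratic_form f"
    and "nondeg_on UNIV f"
    and "witt_index f 2"
    and "is_hyperplane H0"
    and "nondeg_on H0 f"
  shows "(\<forall>C. centric_config f H0 4 C \<longrightarrow>
            card {D. centric_config f H0 5 D \<and> C \<subseteq> D} = 2 \<and>
            card {E. centric_config f H0 6 E \<and> C \<subseteq> E} = 1) \<and>
         (\<forall>D. centric_config f H0 5 D \<longrightarrow>
            card {E. centric_config f H0 6 E \<and> D \<subseteq> E} = 1)"
proof -
  have n1: "n \<ge> 1" using assms(2) by (cases n) auto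
  have c2: "(1::'a) + 1 = 0" using char2_of_card[OF assms(1) n1] .
  interpret qf f by unfold_locales (rule c2, rule assms(3))
  have "Suc 2 = (3::nat)" by simp
  then have nots3: "\<not> ts_subspace_dim f 3" using assms(5) unfolding witt_index_def by metis
  have noT1: "(a::'a)^2 + a \<noteq> 1" for a using no_T1[OF assms(1) assms(2)] .
  have getn0: "\<exists>n0. geo f H0 n0" if cs: "centric_config f H0 k S" and k2: "2 \<le> k" for k S
  proof -
    obtain n0 where n0: "f n0 = 1" "perp f H0 = pt n0" "\<forall>x. x \<in> H0 \<longleftrightarrow> B x n0 = 0"
      using derive_n0[OF assms(6) assms(7) cs k2] by blast
    have "geo f H0 n0" by unfold_locales (use c2 assms(3) n0 nots3 noT1 in auto)
    then show ?thesis by blast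
  qed
  have part1: "card {D. centric_config f H0 5 D \<and> C \<subseteq> D} = 2 \<and>
            card {E. centric_config f H0 6 E \<and> C \<subseteq> E} = 1" if C: "centric_config f H0 4 C" for C
  proof -
    obtain n0 where "geo f H0 n0" using getn0[OF C] by auto
    then interpret g: geo f H0 n0 .
    obtain v where v: "g.good 4 v" "C = g.cset 4 v" using g.good_of_config[OF C] by blast
    obtain p p' where pp: "g.XX 4 v = {p, p'}" "p \<noteq> p'" "B p p' = 1" using g.X_good4[OF v(1)] by blast
    note cm = g.cube_main[OF v(1) pp]
    have "card {D. centric_config f H0 5 D \<and> C \<subseteq> D} = 2" unfolding v(2) cm(1) using cm(2) by simp
    moreover have "card {E. centric_config f H0 6 E \<and> C \<subseteq> E} = 1" unfolding v(2) cm(3) by simp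
    ultimately show ?thesis by blast
  qed
  have part2: "card {E. centric_config f H0 6 E \<and> D \<subseteq> E} = 1" if D: "centric_config f H0 5 D" for D
  proof -
    obtain n0 where "geo f H0 n0" using getn0[OF D] by auto
    then interpret g: geo f H0 n0 .
    obtain u where u: "g.good 5 u" "D = g.cset 5 u" using g.good_of_config[OF D] by blast
    have g4: "g.good 4 u" using g.good_mono[OF u(1)] by simp
    obtain p p' where pp: "g.XX 4 u = {p, p'}" "p \<noteq> p'" "B p p' = 1" using g.X_good4[OF g4] by blast
    note cm = g.cube_main[OF g4 pp]
    let ?E0 = "g.cset 4 u \<union> g.pair p \<union> g.pair p'"
    have five: "(5::nat) \<in> {1..5}" by simp
    have u5: "u 5 \<in> g.XX 4 u"
      unfolding g.XX_def
    proof (intro CollectI conjI ballI)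
      show "g.nrm (u 5)" using g.good_nrm[OF u(1) five] .
      fix i assume "i \<in> {1..4::nat}"
      then have "i \<in> {1..5}" "i \<noteq> 5" by auto
      then show "B (u 5) (u i) = 1" using g.good_B[OF u(1) five] by auto
    qed
    have "g.cset (Suc 4) (u(Suc 4 := u (Suc 4))) = g.cset 4 u \<union> g.pair (u (Suc 4))"
      by (rule g.cset_ext)
    then have c5: "g.cset 5 u = g.cset 4 u \<union> g.pair (u 5)" by (simp add: numeral_eq_Suc)
    have "u 5 \<in> {p, p'}" using u5 pp(1) by simp
    then have sub: "D \<subseteq> ?E0" unfolding u(2) c5 by auto
    have E0: "centric_config f H0 6 ?E0" using cm(3) by blast
    have "{E. centric_config f H0 6 E \<and> D \<subseteq> E} = {?E0}"
    proof (intro equalityI subsetI)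
      fix E assume "E \<in> {E. centric_config f H0 6 E \<and> D \<subseteq> E}"
      then have "centric_config f H0 6 E" "g.cset 4 u \<subseteq> E" unfolding u(2) c5 by auto
      then show "E \<in> {?E0}" using cm(3) by blast
    next
      fix E assume "E \<in> {?E0}"
      then show "E \<in> {E. centric_config f H0 6 E \<and> D \<subseteq> E}" using E0 sub by auto
    qed
    then show ?thesis by simp
  qed
  show ?thesis using part1 part2 by blast
qed


end
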